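(* In the process algebra $\mathcal{G}$ described in the context, let $\mathbb{U}=U_{i_1}U_{i_2}\cdots U_{i_l}$ and $\mathbb{V}=V_{j_1}V_{j_2}\cdots V_{j_r}$ with all $i_s,j_s\in\mathcal{N}$, let $B\in\{\epsilon,Z,G_v\}$, let $\mathbb{P}$ be any sequential composition (possibly empty) of constants from $\{U_k,V_k:k\in\mathcal{N}\}$, and let $\approxeq\;\in\{\simeq,\approx\}$. Then: (1) $I\|B\mathbb{P}\mathbb{U}\approxeq I\|B\mathbb{P}\mathbb{V}$ if and only if $u_{i_1}u_{i_2}\cdots u_{i_l}=v_{j_1}v_{j_2}\cdots v_{j_r}$; (2) $S\|B\mathbb{P}\mathbb{U}\approxeq S\|B\mathbb{P}\mathbb{V}$ if and only if the index sequences coincide: $i_1i_2\cdots i_l=j_1j_2\cdots j_r$.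
   Context: Process algebras: a triple $(\mathcal{C},\mathcal{A},\Delta)$ of finitely many constants, actions (including silent $\tau$) and rules $X\stackrel{\ell}{\longrightarrow}P$. Processes: $P::=\epsilon\mid X\mid PP'\mid P\|P'$, sequential composition associative, parallel composition associative and commutative, $\epsilon$ a unit for both. Semantics: rules of $\Delta$; if $P\stackrel{\ell}{\longrightarrow}P'$ then $PQ\stackrel{\ell}{\longrightarrow}P'Q$, $P\|Q\stackrel{\ell}{\longrightarrow}P'\|Q$, $Q\|P\stackrel{\ell}{\longrightarrow}Q\|P'$. $\Longrightarrow$ is the reflexive transitive closure of $\stackrel{\tau}{\longrightarrow}$; $\stackrel{\widehat{\ell}}{\Longrightarrow}$ is $\Longrightarrow\stackrel{\ell}{\longrightarrow}\Longrightarrow$ if $\ell\ne\tau$ and $\Longrightarrow$ if $\ell=\tau$. Weak bisimilarity $\approx$ is the largest relation $\mathcal{B}$ such that whenever $P\mathcal{B}Q$ and $P\stackrel{\ell}{\longrightarrow}P'$ there is $Q'$ with $Q\stackrel{\widehat{\ell}}{\Longrightarrow}Q'$, $P'\mathcal{B}Q'$, and symmetrically. Branching bisimilarity $\simeq$ is the largest relation $\mathcal{B}$ such that whenever $P\mathcal{B}Q$ and $P\stackrel{\ell}{\longrightarrow}P'$, either $Q\Longrightarrow Q''\stackrel{\ell}{\longrightarrow}Q'$ with $P\mathcal{B}Q''$ and $P'\mathcal{B}Q'$, or $\ell=\tau$ and $P'\mathcal{B}Q$; and symmetrically. The algebra $\mathcal{G}$: fix a finite alphabet $\Sigma$ with $|\Sigma|\ge2$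 and a Post Correspondence instance $\mathrm{INST}=\{(u_1,v_1),\dots,(u_n,v_n)\}$ with $u_k,v_k\in\Sigma^{+}$; let $\mathcal{N}=\{1,\dots,n\}$. Actions: $\{\lambda_U,\lambda_V,\lambda_D,\lambda_I,\lambda_S,\lambda_Z\}\cup\mathcal{N}\cup\Sigma\cup\{\tau\}$. Constants: $X,Y,Z,I,S,C,C',D,G,G',G_u,G_v,G_v'$, $U_k,V_k$ ($k\in\mathcal{N}$), and $W(\omega,k),W(\omega,0)$ for $k\in\mathcal{N}$ and $\omega$ a (possibly empty) suffix of $u_k$ or of $v_k$; $\mathcal{W}$ is the set of these $W$-constants. Rules (with $k$ ranging over $\mathcal{N}$, $a$ over $\Sigma$, $W$ over $\mathcal{W}$): $X\stackrel{\lambda_U}{\longrightarrow}D\|G_v$, $X\stackrel{\tau}{\longrightarrow}D$, $Y\stackrel{\tau}{\longrightarrow}D$, $D\stackrel{\tau}{\longrightarrow}D\|G_u$, $D\stackrel{\lambda_D}{\longrightarrow}C$; $G_u\stackrel{\tau}{\longrightarrow}G_uU_k$, $G_u\stackrel{\lambda_U}{\longrightarrow}G_vU_k$, $G_u\stackrel{\tau}{\longrightarrow}G_v'$, $G_v'\stackrel{\tau}{\longrightarrow}G_v'V_k$, $G_v'\stackrel{\tau}{\longrightarrow}Z$; $G_v\stackrel{\tau}{\longrightarrow}G_vV_k$, $G_v\stackrel{\tau}{\longrightarrow}\epsilon$, $G_v\stackrel{\lambda_V}{\longrightarrow}Z$, $Z\stackrel{\tau}{\longrightarrow}\epsilon$,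 $Z\stackrel{\lambda_Z}{\longrightarrow}\epsilon$; $C\stackrel{\lambda_I}{\longrightarrow}I$, $C\stackrel{\lambda_S}{\longrightarrow}S$, $C\stackrel{\tau}{\longrightarrow}C\|G$, $C\stackrel{\tau}{\longrightarrow}C\|G_v$; $G\stackrel{\tau}{\longrightarrow}GU_k$, $G\stackrel{\tau}{\longrightarrow}GV_k$, $G\stackrel{\tau}{\longrightarrow}\epsilon$; $I\stackrel{\lambda_I}{\longrightarrow}C'$, $I\stackrel{k}{\longrightarrow}I$, $S\stackrel{\lambda_S}{\longrightarrow}C'$, $S\stackrel{a}{\longrightarrow}S$, $C'\stackrel{\tau}{\longrightarrow}C'\|G'$, $C'\stackrel{\tau}{\longrightarrow}\epsilon$; $G'\stackrel{\tau}{\longrightarrow}G'U_k$, $G'\stackrel{\tau}{\longrightarrow}G'V_k$, $G'\stackrel{\tau}{\longrightarrow}G'W$, $G'\stackrel{\tau}{\longrightarrow}G_v$, $G'\stackrel{\tau}{\longrightarrow}Z$; $U_k\stackrel{\tau}{\longrightarrow}W(u_k,k)$, $V_k\stackrel{\tau}{\longrightarrow}W(v_k,k)$; $W(a\omega,k)\stackrel{a}{\longrightarrow}W(\omega,k)$, $W(a\omega,0)\stackrel{a}{\longrightarrow}W(\omega,0)$, $W(\omega,k)\stackrel{k}{\longrightarrow}W(\omega,0)$, $W(a\omega,k)\stackrel{\tau}{\longrightarrow}W(\omega,k)$, $W(a\omega,0)\stackrel{\tau}{\longrightarrow}W(\omega,0)$, $W(\omega,k)\stackrel{\tau}{\longrightarrow}W(\omega,0)$,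 $W(\epsilon,0)\stackrel{\tau}{\longrightarrow}\epsilon$. *)

theory Defs
  imports Main "HOL-Library.Sublist"
begin

datatype 'a act = LamU | LamV | LamD | LamI | LamS | LamZ | Num nat | Sym 'a | Tau

datatype 'a const = CX | CY | CZ | CI | CS | CC | CC' | CD | CG | CG' | CGu | CGv | CGv'
  | CU nat | CV nat | CW "'a list" nat

datatype 'a proc = Eps | Const "'a const" | Seq "'a proc" "'a proc" | Par "'a proc" "'a proc"

inductive scong :: "'a proc \<Rightarrow> 'a proc \<Rightarrow> bool" where
  sc_refl: "scong P P"
| sc_sym: "scong P Q \<Longrightarrow> scong Q P"
| sc_trans: "scong P Q \<Longrightarrow> scong Q R \<Longrightarrow> scong P R"
| sc_seq: "scong P P' \<Longrightarrow> scong Q Q' \<Longrightarrow> scong (Seq P Q) (Seq P' Q')"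
| sc_par: "scong P P' \<Longrightarrow> scong Q Q' \<Longrightarrow> scong (Par P Q) (Par P' Q')"
| sc_seq_assoc: "scong (Seq (Seq P Q) R) (Seq P (Seq Q R))"
| sc_par_assoc: "scong (Par (Par P Q) R) (Par P (Par Q R))"
| sc_par_comm: "scong (Par P Q) (Par Q P)"
| sc_seq_unitl: "scong (Seq Eps P) P"
| sc_seq_unitr: "scong (Seq P Eps) P"
| sc_par_unitl: "scong (Par Eps P) P"

definition isW :: "nat \<Rightarrow> (nat \<Rightarrow> 'a list) \<Rightarrow> (nat \<Rightarrow> 'a list) \<Rightarrow> 'a list \<Rightarrow> nat \<Rightarrow> bool" where
  "isW n u v w k \<longleftrightarrow>
     (k \<in> {1..n} \<and> (suffix w (u k) \<or> suffix w (v k))) \<or>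
     (k = 0 \<and> (\<exists>k'\<in>{1..n}. suffix w (u k') \<or> suffix w (v k')))"

inductive grule :: "'a set \<Rightarrow> nat \<Rightarrow> (nat \<Rightarrow> 'a list) \<Rightarrow> (nat \<Rightarrow> 'a list) \<Rightarrow>
    'a const \<Rightarrow> 'a act \<Rightarrow> 'a proc \<Rightarrow> bool"
  for \<Sigma> n u v where
  r1: "grule \<Sigma> n u v CX LamU (Par (Const CD) (Const CGv))"
| r2: "grule \<Sigma> n u v CX Tau (Const CD)"
| r3: "grule \<Sigma> n u v CY Tau (Const CD)"
| r4: "grule \<Sigma> n u v CD Tau (Par (Const CD) (Const CGu))"
| r5: "grule \<Sigma> n u v CD LamD (Const CC)"
| r6: "k \<in> {1..n} \<Longrightarrow> grule \<Sigma> n u v CGu Tau (Seq (Const CGu) (Const (CU k)))"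
| r7: "k \<in> {1..n} \<Longrightarrow> grule \<Sigma> n u v CGu LamU (Seq (Const CGv) (Const (CU k)))"
| r8: "grule \<Sigma> n u v CGu Tau (Const CGv')"
| r9: "k \<in> {1..n} \<Longrightarrow> grule \<Sigma> n u v CGv' Tau (Seq (Const CGv') (Const (CV k)))"
| r10: "grule \<Sigma> n u v CGv' Tau (Const CZ)"
| r11: "k \<in> {1..n} \<Longrightarrow> grule \<Sigma> n u v CGv Tau (Seq (Const CGv) (Const (CV k)))"
| r12: "grule \<Sigma> n u v CGv Tau Eps"
| r13: "grule \<Sigma> n u v CGv LamV (Const CZ)"
| r14: "grule \<Sigma> n u v CZ Tau Eps"
| r15: "grule \<Sigma> n u v CZ LamZ Eps"
| r16: "grule \<Sigma> n u v CC LamI (Const CI)"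
| r17: "grule \<Sigma> n u v CC LamS (Const CS)"
| r18: "grule \<Sigma> n u v CC Tau (Par (Const CC) (Const CG))"
| r19: "grule \<Sigma> n u v CC Tau (Par (Const CC) (Const CGv))"
| r20: "k \<in> {1..n} \<Longrightarrow> grule \<Sigma> n u v CG Tau (Seq (Const CG) (Const (CU k)))"
| r21: "k \<in> {1..n} \<Longrightarrow> grule \<Sigma> n u v CG Tau (Seq (Const CG) (Const (CV k)))"
| r22: "grule \<Sigma> n u v CG Tau Eps"
| r23: "grule \<Sigma> n u v CI LamI (Const CC')"
| r24: "k \<in> {1..n} \<Longrightarrow> grule \<Sigma> n u v CI (Num k) (Const CI)"
| r25: "grule \<Sigma> n u v CS LamS (Const CC')"
| r26: "a \<in> \<Sigma> \<Longrightarrow> grule \<Sigma> n u v CS (Sym a) (Const CS)"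
| r27: "grule \<Sigma> n u v CC' Tau (Par (Const CC') (Const CG'))"
| r28: "grule \<Sigma> n u v CC' Tau Eps"
| r29: "k \<in> {1..n} \<Longrightarrow> grule \<Sigma> n u v CG' Tau (Seq (Const CG') (Const (CU k)))"
| r30: "k \<in> {1..n} \<Longrightarrow> grule \<Sigma> n u v CG' Tau (Seq (Const CG') (Const (CV k)))"
| r31: "isW n u v w k \<Longrightarrow> grule \<Sigma> n u v CG' Tau (Seq (Const CG') (Const (CW w k)))"
| r32: "grule \<Sigma> n u v CG' Tau (Const CGv)"
| r33: "grule \<Sigma> n u v CG' Tau (Const CZ)"
| r34: "k \<in> {1..n} \<Longrightarrow> grule \<Sigma> n u v (CU k) Tau (Const (CW (u k) k))"
| r35: "k \<in> {1..n} \<Longrightarrow> grule \<Sigma> n u v (CV k) Tau (Const (CW (v k) k))"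
| r36: "isW n u v (a # w) k \<Longrightarrow> a \<in> \<Sigma> \<Longrightarrow> grule \<Sigma> n u v (CW (a # w) k) (Sym a) (Const (CW w k))"
| r37: "k \<in> {1..n} \<Longrightarrow> isW n u v w k \<Longrightarrow> grule \<Sigma> n u v (CW w k) (Num k) (Const (CW w 0))"
| r38: "isW n u v (a # w) k \<Longrightarrow> a \<in> \<Sigma> \<Longrightarrow> grule \<Sigma> n u v (CW (a # w) k) Tau (Const (CW w k))"
| r39: "k \<in> {1..n} \<Longrightarrow> isW n u v w k \<Longrightarrow> grule \<Sigma> n u v (CW w k) Tau (Const (CW w 0))"
| r40: "isW n u v [] 0 \<Longrightarrow> grule \<Sigma> n u v (CW [] 0) Tau Eps"

inductive gtrans :: "'a set \<Rightarrow> nat \<Rightarrow> (nat \<Rightarrow> 'a list) \<Rightarrow> (nat \<Rightarrow> 'a list) \<Rightarrow>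
    'a proc \<Rightarrow> 'a act \<Rightarrow> 'a proc \<Rightarrow> bool"
  for \<Sigma> n u v where
  t_rule: "grule \<Sigma> n u v c l P \<Longrightarrow> gtrans \<Sigma> n u v (Const c) l P"
| t_seq: "gtrans \<Sigma> n u v P l P' \<Longrightarrow> gtrans \<Sigma> n u v (Seq P Q) l (Seq P' Q)"
| t_parl: "gtrans \<Sigma> n u v P l P' \<Longrightarrow> gtrans \<Sigma> n u v (Par P Q) l (Par P' Q)"
| t_parr: "gtrans \<Sigma> n u v P l P' \<Longrightarrow> gtrans \<Sigma> n u v (Par Q P) l (Par Q P')"
| t_cong: "scong P P0 \<Longrightarrow> gtrans \<Sigma> n u v P0 l Q0 \<Longrightarrow> scong Q0 Q \<Longrightarrow> gtrans \<Sigma> n u v P l Q"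

definition tau_star where
  "tau_star \<Sigma> n u v = (\<lambda>P Q. gtrans \<Sigma> n u v P Tau Q)\<^sup>*\<^sup>*"

definition weak_step where
  "weak_step \<Sigma> n u v P l Q \<longleftrightarrow>
     (if l = Tau then tau_star \<Sigma> n u v P Q
      else (\<exists>P1 P2. tau_star \<Sigma> n u v P P1 \<and> gtrans \<Sigma> n u v P1 l P2 \<and> tau_star \<Sigma> n u v P2 Q))"

definition weak_bisimulation where
  "weak_bisimulation \<Sigma> n u v R \<longleftrightarrow> (\<forall>P Q. R P Q \<longrightarrow>
     (\<forall>l P'. gtrans \<Sigma> n u v P l P' \<longrightarrow> (\<exists>Q'. weak_step \<Sigma> n u v Q l Q' \<and> R P' Q')) \<and>
     (\<forall>l Q'. gtrans \<Sigma> n u v Q l Q' \<longrightarrow> (\<exists>P'. weak_step \<Sigma> n u v P l P' \<and> R P' Q')))"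

definition weak_bisim where
  "weak_bisim \<Sigma> n u v P Q \<longleftrightarrow> (\<exists>R. weak_bisimulation \<Sigma> n u v R \<and> R P Q)"

definition branching_bisimulation where
  "branching_bisimulation \<Sigma> n u v R \<longleftrightarrow> (\<forall>P Q. R P Q \<longrightarrow>
     (\<forall>l P'. gtrans \<Sigma> n u v P l P' \<longrightarrow>
        (\<exists>Q'' Q'. tau_star \<Sigma> n u v Q Q'' \<and> gtrans \<Sigma> n u v Q'' l Q' \<and> R P Q'' \<and> R P' Q')
        \<or> (l = Tau \<and> R P' Q)) \<and>
     (\<forall>l Q'. gtrans \<Sigma> n u v Q l Q' \<longrightarrow>
        (\<exists>P'' P'. tau_star \<Sigma> n u v P P'' \<and> gtrans \<Sigma> n u v P'' l P' \<and> R P'' Q \<and> R P' Q')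
        \<or> (l = Tau \<and> R P Q')))"

definition branching_bisim where
  "branching_bisim \<Sigma> n u v P Q \<longleftrightarrow> (\<exists>R. branching_bisimulation \<Sigma> n u v R \<and> R P Q)"

definition seqs :: "'a proc list \<Rightarrow> 'a proc" where
  "seqs ps = foldr Seq ps Eps"

end

theory Submission
  imports Defs "HOL-Library.Multiset"
begin


type_synonym 'a ms = "'a const list multiset"

definition sgl :: "'a ms \<Rightarrow> 'a const list option" where
  "sgl M = (if \<exists>t. M = {#t#} then Some (THE t. M = {#t#}) else None)"

lemma sgl_single[simp]: "sgl {#t#} = Some t" by (simp add: sgl_def)
lemma sgl_Some: "sgl M = Some t \<longleftrightarrow> M = {#t#}" by (auto simp: sgl_def)
lemma sgl_None: "sgl M = None \<longleftrightarrow> (\<forall>t. M \<noteq> {#t#})" by (auto simp: sgl_def)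

definition seqm :: "'a ms \<Rightarrow> 'a ms \<Rightarrow> 'a ms option" where
  "seqm M N = (if M = {#} then Some N else if N = {#} then Some M
     else (case sgl M of None \<Rightarrow> None | Some s \<Rightarrow> (case sgl N of None \<Rightarrow> None | Some t \<Rightarrow> Some {#s @ t#})))"

definition seqn :: "'a ms option \<Rightarrow> 'a ms option \<Rightarrow> 'a ms option" where
  "seqn x y = (case x of None \<Rightarrow> None | Some M \<Rightarrow> (case y of None \<Rightarrow> None | Some N \<Rightarrow> seqm M N))"

definition parn :: "'a ms option \<Rightarrow> 'a ms option \<Rightarrow> 'a ms option" where
  "parn x y = (case x of None \<Rightarrow> None | Some M \<Rightarrow> (case y of None \<Rightarrow> None | Some N \<Rightarrow> Some (M + N)))"

fun norm :: "'a proc \<Rightarrow> 'a ms option" where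
  "norm Eps = Some {#}"
| "norm (Const c) = Some {#[c]#}"
| "norm (Seq P Q) = seqn (norm P) (norm Q)"
| "norm (Par P Q) = parn (norm P) (norm Q)"

lemma seqm_single[simp]: "seqm {#s#} {#t#} = Some {#s @ t#}"
  by (simp add: seqm_def)
lemma seqm_empty1[simp]: "seqm {#} N = Some N" by (simp add: seqm_def)
lemma seqm_empty2[simp]: "seqm M {#} = Some M" by (simp add: seqm_def)

lemma seqm_cases:
  "seqm M N = Some K \<longleftrightarrow> (M = {#} \<and> K = N) \<or> (N = {#} \<and> K = M) \<or>
     (\<exists>s t. M = {#s#} \<and> N = {#t#} \<and> K = {#s@t#})"
  by (auto simp: seqm_def sgl_Some split: option.splits)

lemma seqm_assoc: "(case seqm M N of None \<Rightarrow> None | Some K \<Rightarrow> seqm K L) =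
   (case seqm N L of None \<Rightarrow> None | Some K \<Rightarrow> seqm M K)"
  apply (cases "M = {#}"; cases "N = {#}"; cases "L = {#}"; simp split: option.splits)
  apply (auto simp: seqm_def sgl_Some sgl_None split: option.splits)
  done

lemma seqn_assoc: "seqn (seqn x y) z = seqn x (seqn y z)"
proof -
  { fix M N L assume "x = Some M" "y = Some N" "z = Some L"
    hence ?thesis using seqm_assoc[where M=M and N=N and L=L] by (simp add: seqn_def split: option.splits) }
  thus ?thesis by (cases x; cases y; cases z; simp add: seqn_def split: option.splits)
qed

lemma norm_scong: "scong P Q \<Longrightarrow> norm P = norm Q"
proof (induction rule: scong.induct)
  case (sc_seq_assoc P Q R) thus ?case by (simp add: seqn_assoc)
next
  case (sc_par_assoc P Q R) thus ?case by (simp add: parn_def split: option.splits)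
next
  case (sc_par_comm P Q) thus ?case by (simp add: parn_def add.commute split: option.splits)
next
  case (sc_seq_unitl P) thus ?case by (simp add: seqn_def split: option.splits)
next
  case (sc_seq_unitr P) thus ?case by (simp add: seqn_def split: option.splits)
next
  case (sc_par_unitl P) thus ?case by (simp add: parn_def split: option.splits)
qed auto

definition ofthr :: "'a const list \<Rightarrow> 'a ms" where
  "ofthr t = (if t = [] then {#} else {#t#})"

fun tp :: "'a const list \<Rightarrow> 'a proc" where
  "tp [] = Eps"
| "tp (c # r) = Seq (Const c) (tp r)"

lemma norm_tp[simp]: "norm (tp t) = Some (ofthr t)"
  by (induction t) (auto simp: ofthr_def seqn_def)

lemma grule_norm: "grule \<Sigma> n u v c l R \<Longrightarrow> \<exists>RM. norm R = Some RM"
  by (induction rule: grule.induct) (auto simp: seqn_def parn_def)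

lemma seqm_ofthr: "t \<noteq> [] \<Longrightarrow> seqm (ofthr r) {#t#} = Some (ofthr (r @ t))"
  by (auto simp: ofthr_def)

lemma norm_nonempty: "norm P = Some M \<Longrightarrow> [] \<notin># M"
proof (induction P arbitrary: M)
  case (Seq P Q) thus ?case by (auto simp: seqn_def seqm_cases split: option.splits)
next
  case (Par P Q) thus ?case by (auto simp: parn_def split: option.splits)
qed auto

lemma inv_step:
  assumes "gtrans \<Sigma> n u v P l Q" "norm P = Some M"
  shows "\<exists>c rest K R RM. M = add_mset (c#rest) K \<and> grule \<Sigma> n u v c l R \<and> norm R = Some RM
     \<and> norm Q = parn (seqm RM (ofthr rest)) (Some K)"
  using assms
proof (induction arbitrary: M rule: gtrans.induct)
  case (t_rule c l P)
  then obtain RM where "norm P = Some RM" using grule_norm by blast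
  thus ?case using t_rule by (auto simp: ofthr_def parn_def intro!: exI[of _ c] exI[of _ "[]"])
next
  case (t_seq P l P' Q)
  from t_seq.prems obtain MP MQ where mp: "norm P = Some MP" and mq: "norm Q = Some MQ"
    and sq: "seqm MP MQ = Some M"
    by (auto simp: seqn_def split: option.splits)
  from t_seq.IH[OF mp] obtain c rest K R RM where
    h: "MP = add_mset (c#rest) K" "grule \<Sigma> n u v c l R" "norm R = Some RM"
       "norm P' = parn (seqm RM (ofthr rest)) (Some K)" by blast
  from sq h(1) consider "MQ = {#}" "M = MP" | t where "MQ = {#t#}" "K = {#}" "M = {#(c#rest)@t#}"
    by (auto simp: seqm_cases)
  thus ?case
  proof cases
    case 1 show ?thesis
      apply (rule exI[of _ c], rule exI[of _ "rest"], rule exI[of _ K], rule exI[of _ R], rule exI[of _ RM])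
      using 1 h mq by (auto simp: seqn_def parn_def split: option.splits)
  next
    case 2
    have tne: "t \<noteq> []" using norm_nonempty[OF mq] 2 by auto
    have e1: "norm (Seq P' Q) = seqn (seqm RM (ofthr rest)) (Some {#t#})"
      using h(4) 2 mq by (simp add: parn_def seqn_def split: option.splits)
    also have "\<dots> = (case seqm RM (ofthr rest) of None \<Rightarrow> None | Some K \<Rightarrow> seqm K {#t#})"
      by (simp add: seqn_def split: option.splits)
    also have "\<dots> = seqm RM (ofthr (rest @ t))"
      using seqm_assoc[where M=RM and N="ofthr rest" and L="{#t#}"] seqm_ofthr[OF tne, of rest] by simp
    finally have e2: "norm (Seq P' Q) = parn (seqm RM (ofthr (rest @ t))) (Some {#})"
      by (simp add: parn_def split: option.splits)
    show ?thesis
      apply (rule exI[of _ c], rule exI[of _ "rest @ t"], rule exI[of _ "{#}"], rule exI[of _ R], rule exI[of _ RM])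
      using 2 h(2,3) e2 by simp
  qed
next
  case (t_parl P l P' Q)
  from t_parl.prems obtain MP MQ where mp: "norm P = Some MP" and mq: "norm Q = Some MQ"
    and sq: "M = MP + MQ"
    by (auto simp: parn_def split: option.splits)
  from t_parl.IH[OF mp] obtain c rest K R RM where
    h: "MP = add_mset (c#rest) K" "grule \<Sigma> n u v c l R" "norm R = Some RM"
       "norm P' = parn (seqm RM (ofthr rest)) (Some K)" by blast
  show ?case
      apply (rule exI[of _ c], rule exI[of _ "rest"], rule exI[of _ "K + MQ"], rule exI[of _ R], rule exI[of _ RM])
      using h mq sq by (simp add: parn_def split: option.splits)
next
  case (t_parr P l P' Q)
  from t_parr.prems obtain MP MQ where mp: "norm P = Some MP" and mq: "norm Q = Some MQ"
    and sq: "M = MQ + MP"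
    by (auto simp: parn_def split: option.splits)
  from t_parr.IH[OF mp] obtain c rest K R RM where
    h: "MP = add_mset (c#rest) K" "grule \<Sigma> n u v c l R" "norm R = Some RM"
       "norm P' = parn (seqm RM (ofthr rest)) (Some K)" by blast
  show ?case
      apply (rule exI[of _ c], rule exI[of _ "rest"], rule exI[of _ "K + MQ"], rule exI[of _ R], rule exI[of _ RM])
      using h mq sq by (simp add: parn_def split: option.splits)
next
  case (t_cong P P0 l Q0 Q)
  have "norm P0 = Some M" using t_cong norm_scong by metis
  moreover have "norm Q = norm Q0" using t_cong(3) norm_scong by metis
  ultimately show ?case using t_cong.IH by simp
qed

lemmas sc_intros = scong.intros

lemma sc_par_unitr: "scong (Par P Eps) P"
  by (meson sc_par_comm sc_par_unitl sc_trans)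

lemma norm_empty_scong: "norm P = Some {#} \<Longrightarrow> scong P Eps"
proof (induction P)
  case (Seq P Q)
  hence "norm P = Some {#}" "norm Q = Some {#}" by (auto simp: seqn_def seqm_cases split: option.splits)
  with Seq show ?case by (meson sc_seq sc_seq_unitl sc_trans)
next
  case (Par P Q)
  hence "norm P = Some {#}" "norm Q = Some {#}" by (auto simp: parn_def split: option.splits)
  with Par show ?case by (meson sc_par sc_par_unitl sc_trans)
qed (auto intro: sc_refl)

lemma tp_app: "scong (Seq (tp a) (tp b)) (tp (a @ b))"
proof (induction a)
  case Nil thus ?case by (simp add: sc_seq_unitl)
next
  case (Cons c a)
  have "scong (Seq (Seq (Const c) (tp a)) (tp b)) (Seq (Const c) (Seq (tp a) (tp b)))" by (rule sc_seq_assoc)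
  moreover have "scong (Seq (Const c) (Seq (tp a) (tp b))) (Seq (Const c) (tp (a@b)))"
    using Cons by (simp add: sc_seq sc_refl)
  ultimately show ?case by (auto intro: sc_trans)
qed

lemma norm_single_scong: "norm P = Some {#t#} \<Longrightarrow> scong P (tp t)"
proof (induction P arbitrary: t)
  case Eps thus ?case by simp
next
  case (Const c) thus ?case using sc_sym[OF sc_seq_unitr[of "Const c"]] by auto
next
  case (Seq P Q)
  then obtain MP MQ where mp: "norm P = Some MP" and mq: "norm Q = Some MQ" and sq: "seqm MP MQ = Some {#t#}"
    by (auto simp: seqn_def split: option.splits)
  from sq consider "MP = {#}" "MQ = {#t#}" | "MQ = {#}" "MP = {#t#}" | a b where "MP = {#a#}" "MQ = {#b#}" "t = a @ b"
    by (auto simp: seqm_cases)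
  thus ?case
  proof cases
    case 1 thus ?thesis using Seq mp mq norm_empty_scong by (meson sc_seq sc_seq_unitl sc_trans)
  next
    case 2 thus ?thesis using Seq mp mq norm_empty_scong by (meson sc_seq sc_seq_unitr sc_trans)
  next
    case 3 thus ?thesis using Seq mp mq tp_app by (meson sc_seq sc_trans)
  qed
next
  case (Par P Q)
  then obtain MP MQ where mp: "norm P = Some MP" and mq: "norm Q = Some MQ" and sq: "MP + MQ = {#t#}"
    by (auto simp: parn_def split: option.splits)
  from sq consider "MP = {#}" "MQ = {#t#}" | "MQ = {#}" "MP = {#t#}"
    by (metis single_is_union)
  thus ?case
  proof cases
    case 1 thus ?thesis using Par mp mq norm_empty_scong by (meson sc_par sc_par_unitl sc_trans)
  next
    case 2 thus ?thesis using Par mp mq norm_empty_scong by (meson sc_par sc_par_unitr sc_trans)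
  qed
qed

lemma decomp:
  "norm P = Some M \<Longrightarrow> t \<in># M \<Longrightarrow> \<exists>Pk. scong P (Par (tp t) Pk) \<and> norm Pk = Some (M - {#t#})"
proof (induction P arbitrary: M)
  case Eps thus ?case by simp
next
  case (Const c)
  have "scong (Const c) (Par (Seq (Const c) Eps) Eps)"
    using sc_sym[OF sc_seq_unitr[of "Const c"]] sc_sym[OF sc_par_unitr[of "Seq (Const c) Eps"]] sc_trans by blast
  thus ?case using Const by (auto intro!: exI[of _ Eps])
next
  case (Seq P Q)
  then obtain MP MQ where mp: "norm P = Some MP" and mq: "norm Q = Some MQ" and sq: "seqm MP MQ = Some M"
    by (auto simp: seqn_def split: option.splits)
  from sq consider "MP = {#}" "MQ = M" | "MQ = {#}" "MP = M" | a b where "MP = {#a#}" "MQ = {#b#}" "M = {#a @ b#}"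
    by (auto simp: seqm_cases)
  thus ?case
  proof cases
    case 1
    then obtain Pk where "scong Q (Par (tp t) Pk)" "norm Pk = Some (M - {#t#})" using Seq mq by blast
    moreover have "scong (Seq P Q) Q" using 1 mp norm_empty_scong by (meson sc_seq sc_refl sc_seq_unitl sc_trans)
    ultimately show ?thesis by (meson sc_trans)
  next
    case 2
    then obtain Pk where "scong P (Par (tp t) Pk)" "norm Pk = Some (M - {#t#})" using Seq mp by blast
    moreover have "scong (Seq P Q) P" using 2 mq norm_empty_scong by (meson sc_seq sc_refl sc_seq_unitr sc_trans)
    ultimately show ?thesis by (meson sc_trans)
  next
    case 3
    have "scong (Seq P Q) (tp (a @ b))" using 3 mp mq norm_single_scong tp_app by (meson sc_seq sc_trans)
    moreover have "scong (tp (a@b)) (Par (tp (a@b)) Eps)" by (meson sc_par_unitr sc_sym)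
    ultimately show ?thesis using 3 Seq.prems by (auto intro!: exI[of _ Eps] intro: sc_trans)
  qed
next
  case (Par P Q)
  then obtain MP MQ where mp: "norm P = Some MP" and mq: "norm Q = Some MQ" and sq: "M = MP + MQ"
    by (auto simp: parn_def split: option.splits)
  show ?case
  proof (cases "t \<in># MP")
    case True
    then obtain Pk where h: "scong P (Par (tp t) Pk)" "norm Pk = Some (MP - {#t#})" using Par mp by blast
    have "scong (Par P Q) (Par (Par (tp t) Pk) Q)" using h by (simp add: sc_par sc_refl)
    hence "scong (Par P Q) (Par (tp t) (Par Pk Q))" by (meson sc_par_assoc sc_trans)
    moreover have "norm (Par Pk Q) = Some (M - {#t#})" using h mq sq True by (simp add: parn_def)
    ultimately show ?thesis by blast
  next
    case False
    hence "t \<in># MQ" using sq Par.prems by auto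
    then obtain Pk where h: "scong Q (Par (tp t) Pk)" "norm Pk = Some (MQ - {#t#})" using Par mq by blast
    have "scong (Par P Q) (Par P (Par (tp t) Pk))" using h by (simp add: sc_par sc_refl)
    moreover have "scong (Par P (Par (tp t) Pk)) (Par (Par (tp t) Pk) P)" by (rule sc_par_comm)
    ultimately have "scong (Par P Q) (Par (tp t) (Par Pk P))" by (meson sc_par_assoc sc_trans)
    moreover have "norm (Par Pk P) = Some (M - {#t#})" using h mp sq \<open>t \<in># MQ\<close> False
      by (simp add: parn_def union_ac)
    ultimately show ?thesis by blast
  qed
qed

lemma fwd_step:
  assumes "norm P = Some (add_mset (c#rest) K)" "grule \<Sigma> n u v c l R" "norm R = Some RM"
    "seqm RM (ofthr rest) = Some G"
  shows "\<exists>Q. gtrans \<Sigma> n u v P l Q \<and> norm Q = Some (G + K)"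
proof -
  obtain Pk where h: "scong P (Par (tp (c#rest)) Pk)" "norm Pk = Some K"
    using decomp[OF assms(1), of "c#rest"] by auto
  have "gtrans \<Sigma> n u v (Par (Seq (Const c) (tp rest)) Pk) l (Par (Seq R (tp rest)) Pk)"
    by (intro t_parl t_seq t_rule assms(2))
  hence "gtrans \<Sigma> n u v P l (Par (Seq R (tp rest)) Pk)"
    using h(1) by (auto intro: t_cong sc_refl)
  moreover have "norm (Par (Seq R (tp rest)) Pk) = Some (G + K)"
    using assms(3,4) h(2) by (simp add: seqn_def parn_def)
  ultimately show ?thesis by blast
qed


context fixes \<Sigma> :: "'a set" and n :: nat and u v :: "nat \<Rightarrow> 'a list"
begin

definition hstep where
  "hstep c l rest G \<longleftrightarrow> (\<exists>R RM. grule \<Sigma> n u v c l R \<and> norm R = Some RM \<and> seqm RM (ofthr rest) = Some G)"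

definition mstep where
  "mstep M l M' \<longleftrightarrow> (\<exists>c rest K G. M = add_mset (c#rest) K \<and> hstep c l rest G \<and> M' = G + K)"

definition forb :: "'a const set" where "forb = {CX, CY, CD, CC, CC', CI, CS}"

definition wfm :: "'a ms \<Rightarrow> bool" where
  "wfm M \<longleftrightarrow> (\<forall>t\<in>#M. t \<noteq> [] \<and> (\<forall>x\<in>set t. x \<in> forb \<longrightarrow> t = [x]))"

lemma grule_shape:
  "grule \<Sigma> n u v c l R \<Longrightarrow>
    (c \<in> forb \<longrightarrow> (\<exists>RM. norm R = Some RM \<and> (\<forall>t\<in>#RM. \<exists>x. t = [x]))) \<and>
    (c \<notin> forb \<longrightarrow> (norm R = Some {#} \<or> (\<exists>t. norm R = Some {#t#} \<and> t \<noteq> [] \<and> set t \<inter> forb = {})))"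
  by (induction rule: grule.induct) (auto simp: forb_def seqn_def parn_def)

lemma mstep_wf: "wfm M \<Longrightarrow> mstep M l M' \<Longrightarrow> wfm M'"
proof -
  assume w: "wfm M" and "mstep M l M'"
  then obtain c rest K G R RM where h: "M = add_mset (c#rest) K" "grule \<Sigma> n u v c l R" "norm R = Some RM"
    "seqm RM (ofthr rest) = Some G" "M' = G + K"
    by (auto simp: mstep_def hstep_def)
  have wK: "wfm K" using w h(1) by (auto simp: wfm_def)
  have "wfm G"
  proof (cases "c \<in> forb")
    case True
    hence "rest = []" using w h(1) by (auto simp: wfm_def)
    hence "G = RM" using h(4) by (simp add: ofthr_def)
    thus ?thesis using grule_shape[OF h(2)] True h(3) by (auto simp: wfm_def)
  next
    case False
    have rf: "set rest \<inter> forb = {}" using w h(1) False by (fastforce simp: wfm_def)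
    from grule_shape[OF h(2)] False h(3) consider "RM = {#}" | t where "RM = {#t#}" "t \<noteq> []" "set t \<inter> forb = {}"
      by auto
    thus ?thesis
    proof cases
      case 1 thus ?thesis using h(4) rf by (auto simp: wfm_def ofthr_def split: if_splits)
    next
      case 2 thus ?thesis using h(4) rf by (auto simp: wfm_def ofthr_def split: if_splits)
    qed
  qed
  thus ?thesis using wK h(5) by (auto simp: wfm_def)
qed

lemma L1:
  assumes "gtrans \<Sigma> n u v P l Q" "norm P = Some M" "wfm M"
  shows "\<exists>M'. norm Q = Some M' \<and> mstep M l M'"
proof -
  from inv_step[OF assms(1,2)] obtain c rest K R RM where h: "M = add_mset (c#rest) K"
    "grule \<Sigma> n u v c l R" "norm R = Some RM" "norm Q = parn (seqm RM (ofthr rest)) (Some K)" by blast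
  have "\<exists>G. seqm RM (ofthr rest) = Some G"
  proof (cases "c \<in> forb")
    case True
    hence "rest = []" using assms(3) h(1) by (auto simp: wfm_def)
    thus ?thesis by (simp add: ofthr_def)
  next
    case False
    thus ?thesis using grule_shape[OF h(2)] h(3) by (auto simp: ofthr_def)
  qed
  then obtain G where g: "seqm RM (ofthr rest) = Some G" by blast
  have "mstep M l (G + K)" unfolding mstep_def hstep_def
    using h(1-3) g by blast
  thus ?thesis using h(4) g by (simp add: parn_def)
qed

lemma L2:
  assumes "mstep M l M'" "norm P = Some M"
  shows "\<exists>Q. gtrans \<Sigma> n u v P l Q \<and> norm Q = Some M'"
  using assms fwd_step by (auto simp: mstep_def hstep_def) blast

abbreviation mtau where "mtau M M' \<equiv> mstep M Tau M'"
definition mts where "mts = mtau\<^sup>*\<^sup>*"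

lemma L1_star:
  assumes "tau_star \<Sigma> n u v P Q" "norm P = Some M" "wfm M"
  shows "\<exists>M'. norm Q = Some M' \<and> mts M M' \<and> wfm M'"
  using assms(1,2,3) unfolding tau_star_def mts_def
proof (induction arbitrary: M rule: rtranclp_induct)
  case base thus ?case by auto
next
  case (step y z)
  then obtain M1 where "norm y = Some M1" "mtau\<^sup>*\<^sup>* M M1" "wfm M1" by blast
  with L1[OF step(2)] mstep_wf show ?case by (meson rtranclp.rtrancl_into_rtrancl)
qed

lemma L2_star:
  assumes "mts M M'" "norm P = Some M"
  shows "\<exists>Q. tau_star \<Sigma> n u v P Q \<and> norm Q = Some M'"
  using assms(1,2) unfolding tau_star_def mts_def
proof (induction arbitrary: P rule: rtranclp_induct)
  case base thus ?case by auto
next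
  case (step y z)
  then obtain Q1 where "(\<lambda>P Q. gtrans \<Sigma> n u v P Tau Q)\<^sup>*\<^sup>* P Q1" "norm Q1 = Some y" by blast
  with L2[OF step(2)] show ?case by (meson rtranclp.rtrancl_into_rtrancl)
qed

lemma mts_wf: "mts M M' \<Longrightarrow> wfm M \<Longrightarrow> wfm M'"
  unfolding mts_def by (induction rule: rtranclp_induct) (auto intro: mstep_wf)

definition mweak_step where
  "mweak_step M l M' \<longleftrightarrow>
     (if l = Tau then mts M M' else (\<exists>M1 M2. mts M M1 \<and> mstep M1 l M2 \<and> mts M2 M'))"

definition mwbs where
  "mwbs RR \<longleftrightarrow> (\<forall>M N. RR M N \<longrightarrow>
     (\<forall>l M'. mstep M l M' \<longrightarrow> (\<exists>N'. mweak_step N l N' \<and> RR M' N')) \<and>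
     (\<forall>l N'. mstep N l N' \<longrightarrow> (\<exists>M'. mweak_step M l M' \<and> RR M' N')))"

definition mbbs where
  "mbbs S \<longleftrightarrow> (\<forall>M N. S M N \<longrightarrow> wfm M \<and> wfm N \<and>
     (\<forall>l M'. mstep M l M' \<longrightarrow>
        (\<exists>N'' N'. mts N N'' \<and> mstep N'' l N' \<and> S M N'' \<and> S M' N') \<or> (l = Tau \<and> S M' N)))"

lemma weak_lift:
  assumes "weak_bisim \<Sigma> n u v P Q" "norm P = Some M" "norm Q = Some N" "wfm M" "wfm N"
  shows "\<exists>RR. mwbs RR \<and> RR M N"
proof -
  define RR where "RR = (\<lambda>M N. wfm M \<and> wfm N \<and> (\<exists>P Q. norm P = Some M \<and> norm Q = Some N \<and> weak_bisim \<Sigma> n u v P Q))"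
  have ws: "\<exists>M'. mweak_step M l M' \<and> norm Q' = Some M' \<and> wfm M'"
    if b1: "weak_step \<Sigma> n u v Q l Q'" and b2: "norm Q = Some M" and b3: "wfm M" for Q l Q' M
  proof (cases "l = Tau")
    case True thus ?thesis using b1 b2 b3 L1_star by (simp add: weak_step_def mweak_step_def) blast
  next
    case False
    then obtain P1 P2 where p: "tau_star \<Sigma> n u v Q P1" "gtrans \<Sigma> n u v P1 l P2" "tau_star \<Sigma> n u v P2 Q'"
      using b1 False by (simp add: weak_step_def) blast
    obtain M1 where m1: "norm P1 = Some M1" "mts M M1" "wfm M1" using L1_star[OF p(1) b2 b3] by blast
    obtain M2 where m2: "norm P2 = Some M2" "mstep M1 l M2" using L1[OF p(2) m1(1,3)] by blast
    have "wfm M2" using m2 m1 mstep_wf by blast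
    then obtain M3 where m3: "norm Q' = Some M3" "mts M2 M3" "wfm M3" using L1_star[OF p(3) m2(1)] by blast
    show ?thesis using False m1 m2 m3 by (auto simp: mweak_step_def)
  qed
  have "mwbs RR"
    unfolding mwbs_def
  proof (intro allI impI conjI)
    fix M N l M' assume r: "RR M N" and st: "mstep M l M'"
    then obtain P Q where pq: "norm P = Some M" "norm Q = Some N" "weak_bisim \<Sigma> n u v P Q" "wfm M" "wfm N"
      by (auto simp: RR_def)
    then obtain R where R: "weak_bisimulation \<Sigma> n u v R" "R P Q" by (auto simp: weak_bisim_def)
    obtain P' where p': "gtrans \<Sigma> n u v P l P'" "norm P' = Some M'" using L2[OF st pq(1)] by blast
    obtain Q' where q': "weak_step \<Sigma> n u v Q l Q'" "R P' Q'" using R p'(1) unfolding weak_bisimulation_def by blast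
    obtain N' where "mweak_step N l N'" "norm Q' = Some N'" "wfm N'" using ws[OF q'(1) pq(2) pq(5)] by blast
    moreover have "wfm M'" using mstep_wf pq(4) st by blast
    ultimately show "\<exists>N'. mweak_step N l N' \<and> RR M' N'" using p' q' R(1)
      by (auto simp: RR_def weak_bisim_def)
  next
    fix M N l N' assume r: "RR M N" and st: "mstep N l N'"
    then obtain P Q where pq: "norm P = Some M" "norm Q = Some N" "weak_bisim \<Sigma> n u v P Q" "wfm M" "wfm N"
      by (auto simp: RR_def)
    then obtain R where R: "weak_bisimulation \<Sigma> n u v R" "R P Q" by (auto simp: weak_bisim_def)
    obtain Q' where q': "gtrans \<Sigma> n u v Q l Q'" "norm Q' = Some N'" using L2[OF st pq(2)] by blast
    obtain P' where p': "weak_step \<Sigma> n u v P l P'" "R P' Q'" using R q'(1) unfolding weak_bisimulation_def by blast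
    obtain M' where "mweak_step M l M'" "norm P' = Some M'" "wfm M'" using ws[OF p'(1) pq(1) pq(4)] by blast
    moreover have "wfm N'" using mstep_wf pq(5) st by blast
    ultimately show "\<exists>M'. mweak_step M l M' \<and> RR M' N'" using p' q' R(1)
      by (auto simp: RR_def weak_bisim_def)
  qed
  moreover have "RR M N" using assms by (auto simp: RR_def)
  ultimately show ?thesis by blast
qed

lemma branching_lift:
  assumes S: "mbbs S" and sym: "\<And>M N. S M N \<Longrightarrow> S N M" and "S M N" "norm P = Some M" "norm Q = Some N"
  shows "branching_bisim \<Sigma> n u v P Q"
proof -
  define R where "R = (\<lambda>P Q. \<exists>M N. norm P = Some M \<and> norm Q = Some N \<and> S M N)"
  have one: "(\<exists>Q'' Q'. tau_star \<Sigma> n u v Q Q'' \<and> gtrans \<Sigma> n u v Q'' l Q' \<and> R P Q'' \<and> R P' Q') \<or> (l = Tau \<and> R P' Q)"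
    if a1: "R P Q" and a2: "gtrans \<Sigma> n u v P l P'" for P Q l P'
  proof -
    from a1 obtain M N where mn: "norm P = Some M" "norm Q = Some N" "S M N" by (auto simp: R_def)
    hence w: "wfm M" using S by (auto simp: mbbs_def)
    obtain M' where m': "norm P' = Some M'" "mstep M l M'" using L1[OF a2 mn(1) w] by blast
    from S mn(3) m'(2) have
      "(\<exists>N'' N'. mts N N'' \<and> mstep N'' l N' \<and> S M N'' \<and> S M' N') \<or> (l = Tau \<and> S M' N)"
      by (auto simp: mbbs_def)
    thus ?thesis
    proof
      assume "\<exists>N'' N'. mts N N'' \<and> mstep N'' l N' \<and> S M N'' \<and> S M' N'"
      then obtain N'' N' where h: "mts N N''" "mstep N'' l N'" "S M N''" "S M' N'" by blast
      obtain Q'' where q'': "tau_star \<Sigma> n u v Q Q''" "norm Q'' = Some N''" using L2_star[OF h(1) mn(2)] by blast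
      obtain Q' where q': "gtrans \<Sigma> n u v Q'' l Q'" "norm Q' = Some N'" using L2[OF h(2) q''(2)] by blast
      show ?thesis using q'' q' h mn m' by (auto simp: R_def)
    next
      assume "l = Tau \<and> S M' N" thus ?thesis using mn m' by (auto simp: R_def)
    qed
  qed
  have "branching_bisimulation \<Sigma> n u v R"
    unfolding branching_bisimulation_def
  proof (intro allI impI conjI)
    fix P Q l P' assume "R P Q" "gtrans \<Sigma> n u v P l P'"
    thus "(\<exists>Q'' Q'. tau_star \<Sigma> n u v Q Q'' \<and> gtrans \<Sigma> n u v Q'' l Q' \<and> R P Q'' \<and> R P' Q') \<or> (l = Tau \<and> R P' Q)"
      using one by blast
  next
    fix P Q l Q' assume a: "R P Q" "gtrans \<Sigma> n u v Q l Q'"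
    have "R Q P" using a(1) sym by (auto simp: R_def)
    from one[OF this a(2)] have "(\<exists>P'' P'. tau_star \<Sigma> n u v P P'' \<and> gtrans \<Sigma> n u v P'' l P' \<and> R Q P'' \<and> R Q' P') \<or> (l = Tau \<and> R Q' P)" .
    moreover have "\<And>X Y. R X Y \<Longrightarrow> R Y X" using sym by (auto simp: R_def)
    ultimately show "(\<exists>P'' P'. tau_star \<Sigma> n u v P P'' \<and> gtrans \<Sigma> n u v P'' l P' \<and> R P'' Q \<and> R P' Q') \<or> (l = Tau \<and> R P Q')"
      by blast
  qed
  thus ?thesis using assms(3-5) by (auto simp: branching_bisim_def R_def)
qed

lemma branching_imp_weak: "branching_bisim \<Sigma> n u v P Q \<Longrightarrow> weak_bisim \<Sigma> n u v P Q"
proof -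
  assume "branching_bisim \<Sigma> n u v P Q"
  then obtain R where R: "branching_bisimulation \<Sigma> n u v R" "R P Q" by (auto simp: branching_bisim_def)
  have "weak_bisimulation \<Sigma> n u v R"
    unfolding weak_bisimulation_def
  proof (intro allI impI conjI)
    fix P Q l P' assume a: "R P Q" "gtrans \<Sigma> n u v P l P'"
    from R(1) a have "(\<exists>Q'' Q'. tau_star \<Sigma> n u v Q Q'' \<and> gtrans \<Sigma> n u v Q'' l Q' \<and> R P Q'' \<and> R P' Q') \<or> (l = Tau \<and> R P' Q)"
      by (auto simp: branching_bisimulation_def)
    thus "\<exists>Q'. weak_step \<Sigma> n u v Q l Q' \<and> R P' Q'"
    proof
      assume "\<exists>Q'' Q'. tau_star \<Sigma> n u v Q Q'' \<and> gtrans \<Sigma> n u v Q'' l Q' \<and> R P Q'' \<and> R P' Q'"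
      then obtain Q'' Q' where h: "tau_star \<Sigma> n u v Q Q''" "gtrans \<Sigma> n u v Q'' l Q'" "R P' Q'" by blast
      have "weak_step \<Sigma> n u v Q l Q'"
      proof (cases "l = Tau")
        case True thus ?thesis using h unfolding weak_step_def tau_star_def by (auto intro: rtranclp.rtrancl_into_rtrancl)
      next
        case False thus ?thesis using h unfolding weak_step_def tau_star_def by auto
      qed
      thus ?thesis using h by blast
    next
      assume "l = Tau \<and> R P' Q" thus ?thesis by (auto simp: weak_step_def tau_star_def)
    qed
  next
    fix P Q l Q' assume a: "R P Q" "gtrans \<Sigma> n u v Q l Q'"
    from R(1) a have "(\<exists>P'' P'. tau_star \<Sigma> n u v P P'' \<and> gtrans \<Sigma> n u v P'' l P' \<and> R P'' Q \<and> R P' Q') \<or> (l = Tau \<and> R P Q')"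
      by (auto simp: branching_bisimulation_def)
    thus "\<exists>P'. weak_step \<Sigma> n u v P l P' \<and> R P' Q'"
    proof
      assume "\<exists>P'' P'. tau_star \<Sigma> n u v P P'' \<and> gtrans \<Sigma> n u v P'' l P' \<and> R P'' Q \<and> R P' Q'"
      then obtain P'' P' where h: "tau_star \<Sigma> n u v P P''" "gtrans \<Sigma> n u v P'' l P'" "R P' Q'" by blast
      have "weak_step \<Sigma> n u v P l P'"
      proof (cases "l = Tau")
        case True thus ?thesis using h unfolding weak_step_def tau_star_def by (auto intro: rtranclp.rtrancl_into_rtrancl)
      next
        case False thus ?thesis using h unfolding weak_step_def tau_star_def by auto
      qed
      thus ?thesis using h by blast
    next
      assume "l = Tau \<and> R P Q'" thus ?thesis by (auto simp: weak_step_def tau_star_def)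
    qed
  qed
  thus ?thesis using R(2) by (auto simp: weak_bisim_def)
qed

lemma branching_refl: "branching_bisim \<Sigma> n u v P P"
proof -
  have "branching_bisimulation \<Sigma> n u v (=)"
    unfolding branching_bisimulation_def tau_star_def by auto
  thus ?thesis by (auto simp: branching_bisim_def)
qed

end


context fixes \<Sigma> :: "'a set" and n :: nat and u v :: "nat \<Rightarrow> 'a list"
begin

lemma seqn_SS[simp]: "seqn (Some M) (Some N) = seqm M N" by (simp add: seqn_def)
lemma parn_SS[simp]: "parn (Some M) (Some N) = Some (M + N)" by (simp add: parn_def)

lemma seqm_1[simp]: "seqm {#[x]#} (ofthr rest) = Some {#x#rest#}"
  by (simp add: ofthr_def)
lemma seqm_2[simp]: "seqm {#[x,y]#} (ofthr rest) = Some {#x#y#rest#}"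
  by (simp add: ofthr_def)
lemma seqm_0[simp]: "seqm {#} (ofthr rest) = Some (ofthr rest)"
  by simp
lemma seqm_par[simp]: "seqm {#[x],[y]#} (ofthr rest) = (if rest = [] then Some {#[x],[y]#} else None)"
  by (auto simp: ofthr_def seqm_def sgl_def)

lemma hstepI: "grule \<Sigma> n u v c l R \<Longrightarrow> norm R = Some RM \<Longrightarrow> seqm RM (ofthr rest) = Some G \<Longrightarrow>
  hstep \<Sigma> n u v c l rest G"
  unfolding hstep_def by blast

lemma hs_extra:
  "k \<in> {1..n} \<Longrightarrow> hstep \<Sigma> n u v CI (Num k) rest {#CI#rest#}"
  "k \<in> {1..n} \<Longrightarrow> hstep \<Sigma> n u v CG' Tau rest {#CG'#CU k#rest#}"
  "k \<in> {1..n} \<Longrightarrow> hstep \<Sigma> n u v CG' Tau rest {#CG'#CV k#rest#}"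
  "k \<in> {1..n} \<Longrightarrow> hstep \<Sigma> n u v CGv Tau rest {#CGv#CV k#rest#}"
  by (rule hstepI, erule grule.intros, simp, simp)+

lemma hstep_CI: "hstep \<Sigma> n u v CI l rest G \<longleftrightarrow>
   (l = LamI \<and> G = {#CC' # rest#}) \<or> (\<exists>k\<in>{1..n}. l = Num k \<and> G = {#CI#rest#})"
  apply (rule iffI)
  subgoal unfolding hstep_def grule.simps[of \<Sigma> n u v CI] by (fastforce split: if_splits)
  by (auto intro: hstepI grule.intros[simplified] hs_extra[simplified])

lemma hstep_CS: "hstep \<Sigma> n u v CS l rest G \<longleftrightarrow>
   (l = LamS \<and> G = {#CC' # rest#}) \<or> (\<exists>a\<in>\<Sigma>. l = Sym a \<and> G = {#CS#rest#})"
  apply (rule iffI)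
  subgoal unfolding hstep_def grule.simps[of \<Sigma> n u v CS] by (fastforce split: if_splits)
  by (auto intro: hstepI grule.intros[simplified] hs_extra[simplified])

lemma hstep_CC': "hstep \<Sigma> n u v CC' l rest G \<longleftrightarrow>
   l = Tau \<and> ((rest = [] \<and> G = {#[CC'],[CG']#}) \<or> G = ofthr rest)"
  apply (rule iffI)
  subgoal unfolding hstep_def grule.simps[of \<Sigma> n u v CC'] by (fastforce split: if_splits)
  by (auto intro: hstepI grule.intros[simplified] hs_extra[simplified])

lemma hstep_CG': "hstep \<Sigma> n u v CG' l rest G \<longleftrightarrow>
   l = Tau \<and> ((\<exists>k\<in>{1..n}. G = {#CG'#CU k#rest#} \<or> G = {#CG'#CV k#rest#}) \<or>
     (\<exists>w k. isW n u v w k \<and> G = {#CG'#CW w k#rest#}) \<or> G = {#CGv#rest#} \<or> G = {#CZ#rest#})"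
  apply (rule iffI)
  subgoal unfolding hstep_def grule.simps[of \<Sigma> n u v CG'] by (fastforce split: if_splits)
  by (auto intro: hstepI grule.intros[simplified] hs_extra[simplified])

lemma hstep_CGv: "hstep \<Sigma> n u v CGv l rest G \<longleftrightarrow>
   (l = Tau \<and> (\<exists>k\<in>{1..n}. G = {#CGv#CV k#rest#})) \<or> (l = Tau \<and> G = ofthr rest) \<or> (l = LamV \<and> G = {#CZ#rest#})"
  apply (rule iffI)
  subgoal unfolding hstep_def grule.simps[of \<Sigma> n u v CGv] by (fastforce split: if_splits)
  by (auto intro: hstepI grule.intros[simplified] hs_extra[simplified])

lemma hstep_CZ: "hstep \<Sigma> n u v CZ l rest G \<longleftrightarrow> (l = Tau \<or> l = LamZ) \<and> G = ofthr rest"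
  apply (rule iffI)
  subgoal unfolding hstep_def grule.simps[of \<Sigma> n u v CZ] by (fastforce split: if_splits)
  by (auto intro: hstepI grule.intros[simplified] hs_extra[simplified])

lemma hstep_CU: "hstep \<Sigma> n u v (CU k) l rest G \<longleftrightarrow> k \<in> {1..n} \<and> l = Tau \<and> G = {#CW (u k) k#rest#}"
  apply (rule iffI)
  subgoal unfolding hstep_def grule.simps[of \<Sigma> n u v "CU k"] by (fastforce split: if_splits)
  by (auto intro: hstepI grule.intros[simplified] hs_extra[simplified])

lemma hstep_CV: "hstep \<Sigma> n u v (CV k) l rest G \<longleftrightarrow> k \<in> {1..n} \<and> l = Tau \<and> G = {#CW (v k) k#rest#}"
  apply (rule iffI)
  subgoal unfolding hstep_def grule.simps[of \<Sigma> n u v "CV k"] by (fastforce split: if_splits)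
  by (auto intro: hstepI grule.intros[simplified] hs_extra[simplified])

lemma hstep_CW: "hstep \<Sigma> n u v (CW w k) l rest G \<longleftrightarrow>
   (\<exists>a w'. w = a#w' \<and> isW n u v w k \<and> a \<in> \<Sigma> \<and> (l = Sym a \<or> l = Tau) \<and> G = {#CW w' k#rest#}) \<or>
   (k \<in> {1..n} \<and> isW n u v w k \<and> (l = Num k \<or> l = Tau) \<and> G = {#CW w 0#rest#}) \<or>
   (w = [] \<and> k = 0 \<and> isW n u v [] 0 \<and> l = Tau \<and> G = ofthr rest)"
  apply (rule iffI)
  subgoal unfolding hstep_def grule.simps[of \<Sigma> n u v "CW w k"] by (fastforce split: if_splits)
  by (auto intro: hstepI grule.intros[simplified] hs_extra[simplified])

lemma mstepI: "hstep \<Sigma> n u v c l rest G \<Longrightarrow> mstep \<Sigma> n u v (add_mset (c#rest) K) l (G + K)"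
  unfolding mstep_def by blast

end


locale GL = fixes \<Sigma> :: "'a set" and n :: nat and u v :: "nat \<Rightarrow> 'a list"
  assumes uv: "\<forall>k\<in>{1..n}. u k \<noteq> [] \<and> set (u k) \<subseteq> \<Sigma> \<and> v k \<noteq> [] \<and> set (v k) \<subseteq> \<Sigma>"
begin

abbreviation "MS \<equiv> mstep \<Sigma> n u v"
abbreviation "MT \<equiv> mts \<Sigma> n u v"
abbreviation "HS \<equiv> hstep \<Sigma> n u v"

lemma mts_refl[simp]: "MT M M" by (simp add: mts_def)
lemma mts_trans: "MT M1 M2 \<Longrightarrow> MT M2 M3 \<Longrightarrow> MT M1 M3" unfolding mts_def by (rule rtranclp_trans)
lemma mts_step: "MS M1 Tau M2 \<Longrightarrow> MT M2 M3 \<Longrightarrow> MT M1 M3"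
  unfolding mts_def by (rule converse_rtranclp_into_rtranclp)
lemma mts_hstep: "HS c Tau rest G \<Longrightarrow> MT (G + K) M3 \<Longrightarrow> MT (add_mset (c#rest) K) M3"
  using mts_step mstepI by blast

lemma isW_sigma: "isW n u v (a#w) k \<Longrightarrow> a \<in> \<Sigma>"
  using uv unfolding isW_def by (auto dest!: set_mono_suffix; metis atLeastAtMost_iff subsetD)
lemma isW_tl: "isW n u v (a#w) k \<Longrightarrow> isW n u v w k"
  unfolding isW_def by (meson suffix_ConsD)
lemma isW_0: "isW n u v w k \<Longrightarrow> k \<in> {1..n} \<Longrightarrow> isW n u v w 0"
  unfolding isW_def by auto
lemma isW_nil0: "isW n u v w k \<Longrightarrow> isW n u v [] 0"
  unfolding isW_def by auto
lemma isW_k: "isW n u v w k \<Longrightarrow> k \<noteq> 0 \<Longrightarrow> k \<in> {1..n}"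
  unfolding isW_def by auto
lemma isW_u: "k\<in>{1..n} \<Longrightarrow> isW n u v (u k) k" unfolding isW_def by auto
lemma isW_v: "k\<in>{1..n} \<Longrightarrow> isW n u v (v k) k" unfolding isW_def by auto

definition valid :: "'a const \<Rightarrow> bool" where
  "valid c \<longleftrightarrow> (\<exists>k\<in>{1..n}. c = CU k \<or> c = CV k) \<or> (\<exists>w k. c = CW w k \<and> isW n u v w k)"

fun wrd :: "'a const \<Rightarrow> 'a list" where
  "wrd (CU k) = u k" | "wrd (CV k) = v k" | "wrd (CW w k) = w" | "wrd _ = []"

definition wrds :: "'a const list \<Rightarrow> 'a list" where "wrds T = concat (map wrd T)"

lemma wrds_simps[simp]: "wrds [] = []" "wrds (c # T) = wrd c @ wrds T" "wrds (T1 @ T2) = wrds T1 @ wrds T2"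
  by (auto simp: wrds_def)

definition gen :: "'a const list \<Rightarrow> bool" where
  "gen t \<longleftrightarrow> t \<noteq> [] \<and> (\<exists>h T. t = h @ T \<and> h \<in> {[], [CZ], [CGv], [CG']} \<and> (\<forall>c\<in>set T. valid c))"

lemma W_vanish: "isW n u v w k \<Longrightarrow> MT (add_mset (CW w k # rest) K) (ofthr rest + K)"
proof (induction w arbitrary: k)
  case Nil
  show ?case
  proof (cases "k = 0")
    case True
    thus ?thesis using Nil by (intro mts_hstep[where G="ofthr rest"]) (auto simp: hstep_CW)
  next
    case False
    hence k: "k \<in> {1..n}" using isW_k Nil by blast
    have "MT (add_mset (CW [] 0 # rest) K) (ofthr rest + K)"
      using isW_nil0[OF Nil] by (intro mts_hstep[where G="ofthr rest"]) (auto simp: hstep_CW)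
    thus ?thesis using k Nil by (intro mts_hstep[where G="{#CW [] 0 # rest#}"]) (auto simp: hstep_CW)
  qed
next
  case (Cons a w)
  have "MT (add_mset (CW w k # rest) K) (ofthr rest + K)" using Cons isW_tl by blast
  thus ?case using Cons.prems isW_sigma by (intro mts_hstep[where G="{#CW w k # rest#}"]) (auto simp: hstep_CW)
qed

lemma item_vanish: "valid c \<Longrightarrow> MT (add_mset (c # rest) K) (ofthr rest + K)"
proof -
  assume "valid c"
  then consider k where "k \<in> {1..n}" "c = CU k" | k where "k \<in> {1..n}" "c = CV k" | w k where "c = CW w k" "isW n u v w k"
    by (auto simp: valid_def)
  thus ?thesis
  proof cases
    case 1 thus ?thesis using W_vanish[OF isW_u[OF 1(1)]]
      by (intro mts_hstep[where G="{#CW (u k) k # rest#}"]) (auto simp: hstep_CU)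
  next
    case 2 thus ?thesis using W_vanish[OF isW_v[OF 2(1)]]
      by (intro mts_hstep[where G="{#CW (v k) k # rest#}"]) (auto simp: hstep_CV)
  next
    case 3 thus ?thesis using W_vanish by simp
  qed
qed

lemma T_vanish: "\<forall>c\<in>set T. valid c \<Longrightarrow> MT (ofthr T + K) K"
proof (induction T)
  case Nil thus ?case by (simp add: ofthr_def)
next
  case (Cons c T)
  hence "MT (add_mset (c # T) K) (ofthr T + K)" using item_vanish by simp
  thus ?case using Cons mts_trans by (auto simp: ofthr_def)
qed

lemma ofthr_cons[simp]: "ofthr (c # T) = {#c # T#}" by (simp add: ofthr_def)

lemma gen_vanish: "gen t \<Longrightarrow> MT (add_mset t K) K"
proof -
  assume "gen t"
  then obtain h T where t: "t = h @ T" "h \<in> {[], [CZ], [CGv], [CG']}" "\<forall>c\<in>set T. valid c" "t \<noteq> []"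
    by (auto simp: gen_def)
  have TV: "MT (ofthr T + K) K" using T_vanish t(3) by blast
  have ZV: "MT (add_mset (CZ # T) K) K"
    by (rule mts_hstep[where G="ofthr T"]) (auto simp: hstep_CZ TV)
  from t(2) show ?thesis
  proof (elim insertE)
    assume "h = []" thus ?thesis using TV t by (simp add: ofthr_def)
  next
    assume "h = [CZ]" thus ?thesis using ZV t by simp
  next
    assume h: "h = [CGv]"
    have "MT (add_mset (CGv # T) K) K" by (rule mts_hstep[where G="ofthr T"]) (auto simp: hstep_CGv TV)
    thus ?thesis using h t by simp
  next
    assume h: "h = [CG']"
    have "MT (add_mset (CG' # T) K) K" by (rule mts_hstep[where G="{#CZ # T#}"]) (auto simp: hstep_CG' ZV)
    thus ?thesis using h t by simp
  qed simp
qed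

lemma G'_build: "\<forall>c\<in>set T. valid c \<Longrightarrow> MT (add_mset [CG'] K) (add_mset (CG' # T) K)"
proof (induction T)
  case Nil thus ?case by simp
next
  case (Cons c T)
  have "MS (add_mset (CG' # T) K) Tau (add_mset (CG' # c # T) K)"
  proof -
    have "HS CG' Tau T {#CG' # c # T#}" using Cons.prems by (auto simp: hstep_CG' valid_def)
    from mstepI[OF this, of K] show ?thesis by simp
  qed
  hence "MT (add_mset (CG' # T) K) (add_mset (CG' # c # T) K)" using mts_step mts_refl by blast
  thus ?case using Cons mts_trans by auto
qed

lemma gen_create: "gen t \<Longrightarrow> MT (add_mset [CC'] K) (add_mset [CC'] (add_mset t K))"
proof -
  assume "gen t"
  then obtain h T where t: "t = h @ T" "h \<in> {[], [CZ], [CGv], [CG']}" "\<forall>c\<in>set T. valid c" "t \<noteq> []"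
    by (auto simp: gen_def)
  have "MS (add_mset [CC'] K) Tau ({#[CC'],[CG']#} + K)"
    using mstepI[where c=CC' and l=Tau and rest="[]" and G="{#[CC'],[CG']#}" and K=K] by (simp add: hstep_CC')
  hence s1: "MT (add_mset [CC'] K) (add_mset [CG'] (add_mset [CC'] K))" using mts_step[OF _ mts_refl]
    by (simp add: add_mset_commute)
  have s2: "MT (add_mset [CG'] (add_mset [CC'] K)) (add_mset (CG' # T) (add_mset [CC'] K))"
    using G'_build t(3) by blast
  have s3: "MT (add_mset (CG' # T) (add_mset [CC'] K)) (add_mset t (add_mset [CC'] K))"
  proof -
    have Z: "MT (add_mset (CG' # T) (add_mset [CC'] K)) (add_mset (CZ # T) (add_mset [CC'] K))"
      by (rule mts_hstep[where G="{#CZ # T#}"]) (auto simp: hstep_CG' add_mset_commute)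
    from t(2) show ?thesis
    proof (elim insertE)
      assume h: "h = []"
      have "MT (add_mset (CZ # T) (add_mset [CC'] K)) (add_mset T (add_mset [CC'] K))"
        using h t(1,4) by (intro mts_hstep[where G="ofthr T"]) (auto simp: hstep_CZ ofthr_def add_mset_commute)
      thus ?thesis using Z h t mts_trans by auto
    next
      assume "h = [CZ]" thus ?thesis using Z t by simp
    next
      assume h: "h = [CGv]"
      have "MT (add_mset (CG' # T) (add_mset [CC'] K)) (add_mset (CGv # T) (add_mset [CC'] K))"
        by (rule mts_hstep[where G="{#CGv # T#}"]) (auto simp: hstep_CG' add_mset_commute)
      thus ?thesis using h t by simp
    next
      assume "h = [CG']" thus ?thesis using t by simp
    qed simp
  qed
  show ?thesis using s1 s2 s3 mts_trans by (metis add_mset_commute)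
qed

lemma vanish_all: "\<forall>t\<in>#K2. gen t \<Longrightarrow> MT (add_mset [CC'] (K2 + L)) (add_mset [CC'] L)"
proof (induction K2)
  case empty thus ?case by simp
next
  case (add t K2)
  have "MT (add_mset t (add_mset [CC'] (K2 + L))) (add_mset [CC'] (K2 + L))"
    using gen_vanish add.prems by simp
  thus ?case using add mts_trans by (simp add: add_mset_commute)
qed

lemma create_all: "\<forall>t\<in>#K1. gen t \<Longrightarrow> MT (add_mset [CC'] L) (add_mset [CC'] (K1 + L))"
proof (induction K1)
  case empty thus ?case by simp
next
  case (add t K1)
  have "MT (add_mset [CC'] (K1 + L)) (add_mset [CC'] (add_mset t (K1 + L)))"
    using gen_create add.prems by simp
  thus ?case using add mts_trans by simp
qed

lemma C'_reach: "\<forall>t\<in>#K2. gen t \<Longrightarrow> \<forall>t\<in>#K1. gen t \<Longrightarrow> MT (add_mset [CC'] K2) (add_mset [CC'] K1)"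
  using vanish_all[of K2 "{#}"] create_all[of K1 "{#}"] mts_trans by auto

end


context GL begin

lemma valid_CU: "k \<in> {1..n} \<Longrightarrow> valid (CU k)" by (auto simp: valid_def)
lemma valid_CV: "k \<in> {1..n} \<Longrightarrow> valid (CV k)" by (auto simp: valid_def)
lemma valid_CW: "isW n u v w k \<Longrightarrow> valid (CW w k)" by (auto simp: valid_def)

lemma prep:
  "\<forall>c\<in>set T. valid c \<Longrightarrow> wrds T = a # x \<Longrightarrow>
   \<exists>w k T'. MT (ofthr T + K) (add_mset (CW (a#w) k # T') K) \<and> isW n u v (a#w) k \<and>
     (\<forall>c\<in>set T'. valid c) \<and> w @ wrds T' = x"
proof (induction T)
  case Nil thus ?case by simp
next
  case (Cons c T0)
  have vc: "valid c" and vT: "\<forall>c\<in>set T0. valid c" using Cons.prems by auto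
  from vc consider k where "k \<in> {1..n}" "c = CU k" | k where "k \<in> {1..n}" "c = CV k"
    | w k where "c = CW w k" "isW n u v w k"
    by (auto simp: valid_def)
  thus ?case
  proof cases
    case 1
    with uv obtain b w where uk: "u k = b # w" by (meson list.exhaust)
    hence b: "b = a" "w @ wrds T0 = x" using Cons.prems 1 by auto
    have "MT (add_mset (CU k # T0) K) (add_mset (CW (u k) k # T0) K)"
      using 1 by (intro mts_hstep[where G="{#CW (u k) k # T0#}"]) (auto simp: hstep_CU)
    hence "MT (ofthr (c # T0) + K) (add_mset (CW (a#w) k # T0) K)" using 1 uk b by simp
    thus ?thesis using isW_u[OF 1(1)] uk b vT by auto
  next
    case 2
    with uv obtain b w where uk: "v k = b # w" by (meson list.exhaust)
    hence b: "b = a" "w @ wrds T0 = x" using Cons.prems 2 by auto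
    have "MT (add_mset (CV k # T0) K) (add_mset (CW (v k) k # T0) K)"
      using 2 by (intro mts_hstep[where G="{#CW (v k) k # T0#}"]) (auto simp: hstep_CV)
    hence "MT (ofthr (c # T0) + K) (add_mset (CW (a#w) k # T0) K)" using 2 uk b by simp
    thus ?thesis using isW_v[OF 2(1)] uk b vT by auto
  next
    case 3
    show ?thesis
    proof (cases w)
      case Nil
      hence "wrds T0 = a # x" using Cons.prems 3 by simp
      from Cons.IH[OF vT this] obtain w' k' T' where h: "MT (ofthr T0 + K) (add_mset (CW (a#w') k' # T') K)"
        "isW n u v (a#w') k'" "\<forall>c\<in>set T'. valid c" "w' @ wrds T' = x" by blast
      have "MT (ofthr (c # T0) + K) (ofthr T0 + K)" using W_vanish 3 by simp
      thus ?thesis using h mts_trans by blast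
    next
      case (Cons b w')
      hence "b = a" "w' @ wrds T0 = x" using Cons.prems 3 by auto
      thus ?thesis using 3 Cons vT by (auto intro!: exI[of _ w'] exI[of _ k] exI[of _ T0])
    qed
  qed
qed

definition S1 where
  "S1 M N \<longleftrightarrow> (\<exists>h T1 T2. h \<in> {[], [CZ], [CGv]} \<and> M = add_mset [CI] (ofthr (h @ T1)) \<and>
     N = add_mset [CI] (ofthr (h @ T2)) \<and> (\<forall>c\<in>set T1. valid c) \<and> (\<forall>c\<in>set T2. valid c) \<and> wrds T1 = wrds T2)"

definition S2 where
  "S2 M N \<longleftrightarrow> (\<exists>K1 K2. M = add_mset [CC'] K1 \<and> N = add_mset [CC'] K2 \<and> (\<forall>t\<in>#K1. gen t) \<and> (\<forall>t\<in>#K2. gen t))"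

definition SS where "SS M N \<longleftrightarrow> S1 M N \<or> S2 M N \<or> (M = N \<and> wfm M)"

lemma valid_nforb: "valid c \<Longrightarrow> c \<notin> forb"
  by (auto simp: valid_def forb_def)

lemma gen_nforb: "gen t \<Longrightarrow> x \<in> set t \<Longrightarrow> x \<notin> forb"
proof -
  assume "gen t" "x \<in> set t"
  then obtain h T where "t = h @ T" "h \<in> {[], [CZ], [CGv], [CG']}" "\<forall>c\<in>set T. valid c" by (auto simp: gen_def)
  thus ?thesis using \<open>x \<in> set t\<close> valid_nforb by (auto simp: forb_def)
qed

lemma wf_S1: "h \<in> {[], [CZ], [CGv]} \<Longrightarrow> \<forall>c\<in>set T. valid c \<Longrightarrow> wfm (add_mset [CI] (ofthr (h @ T)))"
proof -
  assume h: "h \<in> {[], [CZ], [CGv]}" and T: "\<forall>c\<in>set T. valid c"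
  have "\<forall>x\<in>set (h @ T). x \<notin> forb" using h T valid_nforb by (auto simp: forb_def)
  moreover have "CI \<in> forb" by (simp add: forb_def)
  ultimately show ?thesis by (auto simp: wfm_def ofthr_def)
qed

lemma wf_S2: "\<forall>t\<in>#K. gen t \<Longrightarrow> wfm (add_mset [CC'] K)"
proof -
  assume K: "\<forall>t\<in>#K. gen t"
  hence "\<forall>t\<in>#K. t \<noteq> [] \<and> (\<forall>x\<in>set t. x \<notin> forb)" using gen_nforb unfolding gen_def by blast
  thus ?thesis by (auto simp: wfm_def)
qed

lemma S1_sym: "S1 M N \<Longrightarrow> S1 N M" unfolding S1_def by metis
lemma S2_sym: "S2 M N \<Longrightarrow> S2 N M" unfolding S2_def by metis
lemma SS_sym: "SS M N \<Longrightarrow> SS N M" unfolding SS_def using S1_sym S2_sym by metis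

lemma SS_wf: "SS M N \<Longrightarrow> wfm M \<and> wfm N"
  unfolding SS_def S1_def S2_def using wf_S1 wf_S2 by auto

lemma split_I:
  "add_mset (c#rest) K = add_mset [x] (ofthr t) \<Longrightarrow>
    (c = x \<and> rest = [] \<and> K = ofthr t) \<or> (c # rest = t \<and> K = {#[x]#})"
  by (auto simp: add_eq_conv_ex ofthr_def split: if_splits)

end


context GL begin

definition obs :: "bool \<Rightarrow> 'a const \<Rightarrow> ('a + nat) list" where
  "obs md c = (if md then map Inl (wrd c) else
     (case c of CU k \<Rightarrow> [Inr k] | CV k \<Rightarrow> [Inr k] | CW w k \<Rightarrow> (if k = 0 then [] else [Inr k]) | _ \<Rightarrow> []))"

definition obss :: "bool \<Rightarrow> 'a const list \<Rightarrow> ('a + nat) list" where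
  "obss md T = concat (map (obs md) T)"

lemma obss_simps[simp]: "obss md [] = []" "obss md (c # T) = obs md c @ obss md T"
  "obss md (T1 @ T2) = obss md T1 @ obss md T2"
  by (auto simp: obss_def)

lemma obss_True: "obss True T = map Inl (wrds T)"
  by (induction T) (auto simp: obs_def)

definition cx :: "bool \<Rightarrow> 'a const" where "cx md = (if md then CI else CS)"

fun va :: "('a + nat) \<Rightarrow> 'a act" where
  "va (Inl a) = Sym a" | "va (Inr k) = Num k"

definition kind :: "bool \<Rightarrow> ('a + nat) \<Rightarrow> bool" where "kind md b \<longleftrightarrow> (md = isl b)"

definition Q :: "bool \<Rightarrow> 'a const list \<Rightarrow> 'a const list \<Rightarrow> 'a ms" where
  "Q md h T = add_mset [cx md] (ofthr (h @ T))"

abbreviation vl :: "'a const list \<Rightarrow> bool" where "vl T \<equiv> \<forall>c\<in>set T. valid c"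

lemma obs_kind: "b \<in> set (obss md T) \<Longrightarrow> kind md b"
  by (induction T) (auto simp: obs_def kind_def split: const.splits if_splits)

lemma hstep_cx: "HS (cx md) l [] G \<Longrightarrow> l \<noteq> Tau \<and> l \<noteq> LamZ \<and> l \<noteq> LamV \<and> (\<forall>b. kind md b \<longrightarrow> l \<noteq> va b)"
  apply (cases md)
   apply (auto simp: cx_def hstep_CI hstep_CS kind_def)
   apply (case_tac b; auto)+
  done

lemma va_neq[simp]: "va b \<noteq> Tau" "va b \<noteq> LamZ" "va b \<noteq> LamV" "Tau \<noteq> va b" "LamZ \<noteq> va b" "LamV \<noteq> va b"
  by (cases b; simp)+

lemma pack: "X = Q md [] T' \<Longrightarrow> vl T' \<Longrightarrow> (l = Tau \<Longrightarrow> suffix (obss md T') (obss md T)) \<Longrightarrow>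
   (\<And>b. kind md b \<Longrightarrow> l = va b \<Longrightarrow> suffix (b # obss md T') (obss md T)) \<Longrightarrow> l \<noteq> LamZ \<Longrightarrow> l \<noteq> LamV \<Longrightarrow>
   (l = Tau \<longrightarrow> (\<exists>T'. X = Q md [] T' \<and> vl T' \<and> suffix (obss md T') (obss md T))) \<and>
   (\<forall>b. kind md b \<longrightarrow> l = va b \<longrightarrow> (\<exists>T'. X = Q md [] T' \<and> vl T' \<and> suffix (b # obss md T') (obss md T))) \<and>
   l \<noteq> LamZ \<and> l \<noteq> LamV"
  by blast

lemma step_Q0:
  assumes "vl T" "MS (Q md [] T) l X"
  shows "(l = Tau \<longrightarrow> (\<exists>T'. X = Q md [] T' \<and> vl T' \<and> suffix (obss md T') (obss md T))) \<and>
         (\<forall>b. kind md b \<longrightarrow> l = va b \<longrightarrow> (\<exists>T'. X = Q md [] T' \<and> vl T' \<and> suffix (b # obss md T') (obss md T))) \<and>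
         l \<noteq> LamZ \<and> l \<noteq> LamV"
proof -
  from assms(2) obtain c rest K G where st: "Q md [] T = add_mset (c#rest) K" "HS c l rest G" "X = G + K"
    unfolding mstep_def by blast
  from split_I[of c rest K "cx md" T] st(1)
  consider (A) "c = cx md" "rest = []" "K = ofthr T" | (B) "c # rest = T" "K = {#[cx md]#}"
    by (auto simp: Q_def)
  thus ?thesis
  proof cases
    case A thus ?thesis using hstep_cx[of md l G] st(2) by simp
  next
    case B
    have vc: "valid c" and vr: "vl rest" using assms(1) B by auto
    have X: "X = Q md [] T'" if "G = ofthr T'" for T' using that st(3) B by (simp add: Q_def)
    from vc consider (U) k where "k \<in> {1..n}" "c = CU k" | (V) k where "k \<in> {1..n}" "c = CV k"
        | (W) w k where "c = CW w k" "isW n u v w k"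
        by (auto simp: valid_def)
    thus ?thesis
    proof cases
      case U
      hence l: "l = Tau" "G = ofthr (CW (u k) k # rest)" using st(2) by (auto simp: hstep_CU)
      moreover have "obs md (CW (u k) k) = obs md (CU k)" using U by (auto simp: obs_def)
      ultimately show ?thesis using vr U B valid_CW[OF isW_u[OF U(1)]]
        by (intro pack[OF X[OF l(2)]]) auto
    next
      case V
      hence l: "l = Tau" "G = ofthr (CW (v k) k # rest)" using st(2) by (auto simp: hstep_CV)
      moreover have "obs md (CW (v k) k) = obs md (CV k)" using V by (auto simp: obs_def)
      ultimately show ?thesis using vr V B valid_CW[OF isW_v[OF V(1)]]
        by (intro pack[OF X[OF l(2)]]) auto
    next
      case W
      from st(2) W consider (a) a w' where "w = a # w'" "a \<in> \<Sigma>" "l = Sym a \<or> l = Tau" "G = ofthr (CW w' k # rest)"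
          | (b) "k \<in> {1..n}" "l = Num k \<or> l = Tau" "G = ofthr (CW w 0 # rest)"
          | (c) "w = []" "k = 0" "l = Tau" "G = ofthr rest"
          by (auto simp: hstep_CW)
      thus ?thesis
      proof cases
        case a
        have v': "vl (CW w' k # rest)" using vr W a isW_tl valid_CW by auto
        show ?thesis
        proof (cases md)
          case True
          have o: "obss md T = Inl a # obss md (CW w' k # rest)" using True B(1)[symmetric] W a by (simp add: obs_def)
          show ?thesis
          proof (rule pack[OF X[OF a(4)] v'])
            fix b assume "kind md b" "l = va b" thus "suffix (b # obss md (CW w' k # rest)) (obss md T)"
              using a(3) o by (cases b) auto
          qed (use o a(3) in \<open>auto intro: suffix_ConsI\<close>)
        next
          case False
          have o: "obss md T = obss md (CW w' k # rest)" using False B(1)[symmetric] W a by (simp add: obs_def)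
          show ?thesis
          proof (rule pack[OF X[OF a(4)] v'])
            fix b assume "kind md b" "l = va b" thus "suffix (b # obss md (CW w' k # rest)) (obss md T)"
              using a(3) o False by (cases b) (auto simp: kind_def)
          qed (use o a(3) in \<open>auto intro: suffix_ConsI\<close>)
        qed
      next
        case b
        have v': "vl (CW w 0 # rest)" using vr W b isW_0 valid_CW by auto
        show ?thesis
        proof (cases md)
          case True
          have o: "obss md T = obss md (CW w 0 # rest)" using True B(1)[symmetric] W b by (simp add: obs_def)
          show ?thesis
          proof (rule pack[OF X[OF b(3)] v'])
            fix ba assume "kind md ba" "l = va ba" thus "suffix (ba # obss md (CW w 0 # rest)) (obss md T)"
              using b(2) o True by (cases ba) (auto simp: kind_def)
          qed (use o b(2) in \<open>auto intro: suffix_ConsI\<close>)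
        next
          case False
          have o: "obss md T = Inr k # obss md (CW w 0 # rest)" using False B(1)[symmetric] W b by (simp add: obs_def)
          show ?thesis
          proof (rule pack[OF X[OF b(3)] v'])
            fix ba assume "kind md ba" "l = va ba" thus "suffix (ba # obss md (CW w 0 # rest)) (obss md T)"
              using b(2) o False by (cases ba) (auto simp: kind_def)
          qed (use o b(2) in \<open>auto intro: suffix_ConsI\<close>)
        qed
      next
        case c
        have o: "obss md T = obss md rest" using B(1)[symmetric] W c by (simp add: obs_def)
        show ?thesis by (rule pack[OF X[OF c(4)] vr]) (use o c(3) in auto)
      qed
    qed
  qed
qed

lemma step_QZ:
  assumes "MS (Q md [CZ] T) l X"
  shows "(l = Tau \<or> l = LamZ) \<longrightarrow> X = Q md [] T"
proof -
  from assms obtain c rest K G where st: "Q md [CZ] T = add_mset (c#rest) K" "HS c l rest G" "X = G + K"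
    unfolding mstep_def by blast
  from split_I[of c rest K "cx md" "CZ # T"] st(1)
  consider (A) "c = cx md" "rest = []" | (B) "c = CZ" "rest = T" "K = {#[cx md]#}"
    by (auto simp: Q_def)
  thus ?thesis
  proof cases
    case A thus ?thesis using hstep_cx[of md l G] st(2) by simp
  next
    case B thus ?thesis using st by (auto simp: hstep_CZ Q_def)
  qed
qed

lemma step_QZ_ex: "MS (Q md [CZ] T) LamZ (Q md [] T)"
proof -
  have "HS CZ LamZ T (ofthr T)" by (simp add: hstep_CZ)
  from mstepI[OF this, of "{#[cx md]#}"] show ?thesis by (simp add: Q_def add_mset_commute)
qed

lemma step_QG:
  assumes "MS (Q md [CGv] T) l X"
  shows "(l = Tau \<longrightarrow> X = Q md [] T \<or> (\<exists>k\<in>{1..n}. X = Q md [CGv] (CV k # T))) \<and> (l = LamV \<longrightarrow> X = Q md [CZ] T)"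
proof -
  from assms obtain c rest K G where st: "Q md [CGv] T = add_mset (c#rest) K" "HS c l rest G" "X = G + K"
    unfolding mstep_def by blast
  from split_I[of c rest K "cx md" "CGv # T"] st(1)
  consider (A) "c = cx md" "rest = []" | (B) "c = CGv" "rest = T" "K = {#[cx md]#}"
    by (auto simp: Q_def)
  thus ?thesis
  proof cases
    case A thus ?thesis using hstep_cx[of md l G] st(2) by simp
  next
    case B thus ?thesis using st by (auto simp: hstep_CGv Q_def)
  qed
qed

lemma step_QG_ex: "MS (Q md [CGv] T) LamV (Q md [CZ] T)"
proof -
  have "HS CGv LamV T {#CZ # T#}" by (simp add: hstep_CGv)
  from mstepI[OF this, of "{#[cx md]#}"] show ?thesis by (simp add: Q_def add_mset_commute)
qed

lemma mts_Q0: "MT (Q md [] T) X \<Longrightarrow> vl T \<Longrightarrow> \<exists>T'. X = Q md [] T' \<and> vl T' \<and> suffix (obss md T') (obss md T)"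
  unfolding mts_def
proof (induction rule: rtranclp_induct)
  case base thus ?case by auto
next
  case (step y z)
  then obtain T' where "y = Q md [] T'" "vl T'" "suffix (obss md T') (obss md T)" by blast
  with step_Q0[of T' md Tau z] step(2) show ?case by (meson suffix_order.trans)
qed

lemma mts_QZ: "MT (Q md [CZ] T) X \<Longrightarrow> vl T \<Longrightarrow>
   X = Q md [CZ] T \<or> (\<exists>T'. X = Q md [] T' \<and> vl T' \<and> suffix (obss md T') (obss md T))"
  unfolding mts_def
proof (induction rule: rtranclp_induct)
  case base thus ?case by auto
next
  case (step y z)
  from step.IH step.prems consider "y = Q md [CZ] T" | T' where "y = Q md [] T'" "vl T'" "suffix (obss md T') (obss md T)"
    by blast
  thus ?case
  proof cases
    case 1
    hence "z = Q md [] T" using step_QZ[of md T Tau z] step(2) by auto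
    thus ?thesis using step.prems by (intro disjI2 exI[of _ T]) auto
  next
    case 2
    with step_Q0[of T' md Tau z] step(2) show ?thesis by (meson suffix_order.trans)
  qed
qed

lemma mts_QG: "MT (Q md [CGv] T) X \<Longrightarrow> vl T \<Longrightarrow>
   (\<exists>x. vl x \<and> X = Q md [CGv] (x @ T)) \<or> (\<exists>T'. X = Q md [] T' \<and> vl T')"
  unfolding mts_def
proof (induction rule: rtranclp_induct)
  case base thus ?case by (auto intro!: exI[of _ "[]"])
next
  case (step y z)
  from step.IH step.prems consider x where "vl x" "y = Q md [CGv] (x @ T)" | T' where "y = Q md [] T'" "vl T'"
    by blast
  thus ?case
  proof cases
    case 1
    from step_QG[of md "x @ T" Tau z] step(2) 1
    consider "z = Q md [] (x @ T)" | k where "k \<in> {1..n}" "z = Q md [CGv] (CV k # x @ T)" by auto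
    thus ?thesis
    proof cases
      case 1 thus ?thesis using \<open>vl x\<close> step.prems by (intro disjI2 exI[of _ "x @ T"]) auto
    next
      case 2 thus ?thesis using \<open>vl x\<close> valid_CV[OF 2(1)] by (intro disjI1 exI[of _ "CV k # x"]) auto
    qed
  next
    case 2
    with step_Q0[of T' md Tau z] step(2) show ?thesis by blast
  qed
qed

lemma noZV_Q0: "vl T \<Longrightarrow> \<not> mweak_step \<Sigma> n u v (Q md [] T) LamZ X \<and> \<not> mweak_step \<Sigma> n u v (Q md [] T) LamV X"
proof -
  assume vT: "vl T"
  { fix M1 M2 l assume a: "MT (Q md [] T) M1" "MS M1 l M2"
    from mts_Q0[OF a(1) vT] obtain T' where "M1 = Q md [] T'" "vl T'" by blast
    hence "l \<noteq> LamZ \<and> l \<noteq> LamV" using step_Q0 a(2) by blast }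
  thus ?thesis unfolding mweak_step_def by auto
qed

lemma prep_obs:
  "vl T \<Longrightarrow> obss md T = b # x \<Longrightarrow>
   \<exists>T1 T'. MT (Q md [] T) (Q md [] T1) \<and> MS (Q md [] T1) (va b) (Q md [] T') \<and> vl T' \<and> obss md T' = x"
proof (cases md)
  case True
  assume vT: "vl T" and o: "obss md T = b # x"
  from o True obtain a x' where b: "b = Inl a" "wrds T = a # x'" "x = map Inl x'"
    by (cases "wrds T") (auto simp: obss_True)
  from prep[OF vT b(2), of "{#[cx md]#}"] obtain w k T' where
    p: "MT (ofthr T + {#[cx md]#}) (add_mset (CW (a # w) k # T') {#[cx md]#})" "isW n u v (a # w) k"
       "vl T'" "w @ wrds T' = x'" by blast
  have "HS (CW (a # w) k) (Sym a) T' (ofthr (CW w k # T'))" using p(2) isW_sigma by (auto simp: hstep_CW)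
  from mstepI[OF this, of "{#[cx md]#}"]
  have "MS (Q md [] (CW (a # w) k # T')) (va b) (Q md [] (CW w k # T'))" using b by (simp add: Q_def add_mset_commute)
  moreover have "MT (Q md [] T) (Q md [] (CW (a # w) k # T'))" using p(1) by (simp add: Q_def add_mset_commute)
  moreover have "vl (CW w k # T')" using p(2,3) isW_tl valid_CW by auto
  moreover have "obss md (CW w k # T') = x" using p(4) b True by (simp add: obss_True obs_def flip: map_append)
  ultimately show ?thesis by blast
next
  case False
  assume vT: "vl T" and o: "obss md T = b # x"
  from vT o show ?thesis
  proof (induction T)
    case Nil thus ?case by simp
  next
    case (Cons c T0)
    have vc: "valid c" and vT0: "vl T0" using Cons.prems by auto
    from vc consider (U) k where "k \<in> {1..n}" "c = CU k" | (V) k where "k \<in> {1..n}" "c = CV k"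
        | (W) w k where "c = CW w k" "isW n u v w k"
        by (auto simp: valid_def)
    thus ?case
    proof cases
      case U
      have bx: "b = Inr k" "x = obss md T0" using Cons.prems U False by (auto simp: obs_def)
      have "HS (CU k) Tau T0 {#CW (u k) k # T0#}" using U by (simp add: hstep_CU)
      from mstepI[OF this, of "{#[cx md]#}"]
      have "MT (Q md [] (c # T0)) (Q md [] (CW (u k) k # T0))"
        using U by (intro mts_step[OF _ mts_refl]) (simp add: Q_def add_mset_commute)
      moreover have "HS (CW (u k) k) (Num k) T0 {#CW (u k) 0 # T0#}"
        using U isW_u[OF U(1)] by (simp add: hstep_CW)
      from mstepI[OF this, of "{#[cx md]#}"]
      have "MS (Q md [] (CW (u k) k # T0)) (va b) (Q md [] (CW (u k) 0 # T0))"
        using bx by (simp add: Q_def add_mset_commute)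
      moreover have "vl (CW (u k) 0 # T0)" using vT0 valid_CW[OF isW_0[OF isW_u[OF U(1)] U(1)]] by auto
      moreover have "obss md (CW (u k) 0 # T0) = x" using bx False by (simp add: obs_def)
      ultimately show ?thesis by blast
    next
      case V
      have bx: "b = Inr k" "x = obss md T0" using Cons.prems V False by (auto simp: obs_def)
      have "HS (CV k) Tau T0 {#CW (v k) k # T0#}" using V by (simp add: hstep_CV)
      from mstepI[OF this, of "{#[cx md]#}"]
      have "MT (Q md [] (c # T0)) (Q md [] (CW (v k) k # T0))"
        using V by (intro mts_step[OF _ mts_refl]) (simp add: Q_def add_mset_commute)
      moreover have "HS (CW (v k) k) (Num k) T0 {#CW (v k) 0 # T0#}"
        using V isW_v[OF V(1)] by (simp add: hstep_CW)
      from mstepI[OF this, of "{#[cx md]#}"]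
      have "MS (Q md [] (CW (v k) k # T0)) (va b) (Q md [] (CW (v k) 0 # T0))"
        using bx by (simp add: Q_def add_mset_commute)
      moreover have "vl (CW (v k) 0 # T0)" using vT0 valid_CW[OF isW_0[OF isW_v[OF V(1)] V(1)]] by auto
      moreover have "obss md (CW (v k) 0 # T0) = x" using bx False by (simp add: obs_def)
      ultimately show ?thesis by blast
    next
      case W
      show ?thesis
      proof (cases "k = 0")
        case True
        hence o0: "obss md T0 = b # x" using Cons.prems W False by (simp add: obs_def)
        from Cons.IH[OF vT0 o0] obtain T1 T' where h: "MT (Q md [] T0) (Q md [] T1)"
          "MS (Q md [] T1) (va b) (Q md [] T')" "vl T'" "obss md T' = x" by blast
        have "MT (Q md [] (c # T0)) (Q md [] T0)" using W_vanish[OF W(2), of T0 "{#[cx md]#}"] W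
          by (simp add: Q_def add_mset_commute)
        thus ?thesis using h mts_trans by blast
      next
        case k0: False
        have k: "k \<in> {1..n}" using isW_k W k0 by blast
        have bx: "b = Inr k" "x = obss md T0" using Cons.prems W False k0 by (auto simp: obs_def)
        have "HS (CW w k) (Num k) T0 {#CW w 0 # T0#}" using W k by (simp add: hstep_CW)
        from mstepI[OF this, of "{#[cx md]#}"]
        have "MS (Q md [] (CW w k # T0)) (va b) (Q md [] (CW w 0 # T0))"
          using bx by (simp add: Q_def add_mset_commute)
        moreover have "vl (CW w 0 # T0)" using vT0 valid_CW isW_0 W k by auto
        moreover have "obss md (CW w 0 # T0) = x" using bx False by (simp add: obs_def)
        ultimately show ?thesis using W mts_refl by blast
      qed
    qed
  qed
qed

lemma ofthr_inj[simp]: "ofthr x = ofthr y \<longleftrightarrow> x = y"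
  by (auto simp: ofthr_def)

lemma Q_inj[simp]: "Q md h T = Q md h T' \<longleftrightarrow> h @ T = h @ T'"
  by (simp add: Q_def)

lemma mwbs_conv: "mwbs \<Sigma> n u v RR \<Longrightarrow> mwbs \<Sigma> n u v (\<lambda>M N. RR N M)"
  unfolding mwbs_def by blast

lemma transfer_tau: "mwbs \<Sigma> n u v RR \<Longrightarrow> RR M N \<Longrightarrow> MT M M' \<Longrightarrow> \<exists>N'. MT N N' \<and> RR M' N'"
proof -
  assume w: "mwbs \<Sigma> n u v RR" and r: "RR M N" and t: "MT M M'"
  have "(mtau \<Sigma> n u v)\<^sup>*\<^sup>* M M' \<Longrightarrow> \<exists>N'. MT N N' \<and> RR M' N'"
  proof (induction rule: rtranclp_induct)
    case base thus ?case using r mts_refl by blast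
  next
    case (step y z)
    then obtain N1 where n1: "MT N N1" "RR y N1" by blast
    with w step(2) obtain N2 where "mweak_step \<Sigma> n u v N1 Tau N2" "RR z N2" unfolding mwbs_def by blast
    thus ?case using n1 mts_trans by (auto simp: mweak_step_def)
  qed
  thus ?thesis using t by (simp add: mts_def)
qed

lemma Q0_sub: "mwbs \<Sigma> n u v RR \<Longrightarrow> RR (Q md [] T1) (Q md [] T2) \<Longrightarrow> vl T1 \<Longrightarrow> vl T2 \<Longrightarrow>
  subseq (obss md T1) (obss md T2)"
proof (induction "obss md T1" arbitrary: T1 T2)
  case Nil thus ?case by (metis list_emb_Nil)
next
  case (Cons b x)
  from prep_obs[OF Cons.prems(3) Cons.hyps(2)[symmetric]] obtain T1a T1' where
    p: "MT (Q md [] T1) (Q md [] T1a)" "MS (Q md [] T1a) (va b) (Q md [] T1')" "vl T1'" "obss md T1' = x" by blast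
  have vT1a: "vl T1a" using mts_Q0[OF p(1) Cons.prems(3)] by auto
  from transfer_tau[OF Cons.prems(1,2) p(1)] obtain N1 where n1: "MT (Q md [] T2) N1" "RR (Q md [] T1a) N1" by blast
  from mts_Q0[OF n1(1) Cons.prems(4)] obtain T2a where t2a: "N1 = Q md [] T2a" "vl T2a" "suffix (obss md T2a) (obss md T2)"
    by blast
  from Cons.prems(1) n1(2) p(2) obtain N2 where n2: "mweak_step \<Sigma> n u v N1 (va b) N2" "RR (Q md [] T1') N2"
    unfolding mwbs_def by blast
  from n2(1) obtain M1 M2 where m: "MT N1 M1" "MS M1 (va b) M2" "MT M2 N2" by (auto simp: mweak_step_def)
  from mts_Q0[OF m(1)[unfolded t2a(1)] t2a(2)] obtain T2b where t2b: "M1 = Q md [] T2b" "vl T2b"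
    "suffix (obss md T2b) (obss md T2a)" by blast
  have kb: "kind md b" using obs_kind[of b md T1] Cons.hyps(2) by (metis list.set_intros(1))
  from step_Q0[OF t2b(2) m(2)[unfolded t2b(1)]] kb obtain T2c where t2c: "M2 = Q md [] T2c" "vl T2c"
    "suffix (b # obss md T2c) (obss md T2b)" by blast
  from mts_Q0[OF m(3)[unfolded t2c(1)] t2c(2)] obtain T2d where t2d: "N2 = Q md [] T2d" "vl T2d"
    "suffix (obss md T2d) (obss md T2c)" by blast
  have "subseq x (obss md T2d)" using Cons.hyps(1)[of T1' T2d] p(3,4) n2(2) t2d Cons.prems(1) by simp
  hence "subseq (b # x) (b # obss md T2c)" using t2d(3) by (meson subseq_Cons2 subseq_order.trans suffix_imp_subseq)
  moreover have "suffix (b # obss md T2c) (obss md T2)" using t2c(3) t2b(3) t2a(3) by (meson suffix_order.trans)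
  ultimately show ?case using Cons.hyps(2) by (metis subseq_order.trans suffix_imp_subseq)
qed

lemma Q0_eq: "mwbs \<Sigma> n u v RR \<Longrightarrow> RR (Q md [] T1) (Q md [] T2) \<Longrightarrow> vl T1 \<Longrightarrow> vl T2 \<Longrightarrow>
  obss md T1 = obss md T2"
  using Q0_sub[of RR md T1 T2] Q0_sub[of "\<lambda>M N. RR N M" md T2 T1] mwbs_conv subseq_order.antisym by blast

lemma QZ_suf: "mwbs \<Sigma> n u v RR \<Longrightarrow> RR (Q md [CZ] T1) (Q md [CZ] T2) \<Longrightarrow> vl T1 \<Longrightarrow> vl T2 \<Longrightarrow>
  suffix (obss md T1) (obss md T2)"
proof -
  assume w: "mwbs \<Sigma> n u v RR" and r: "RR (Q md [CZ] T1) (Q md [CZ] T2)" and v1: "vl T1" and v2: "vl T2"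
  have st: "MS (Q md [CZ] T1) Tau (Q md [] T1)"
  proof -
    have "HS CZ Tau T1 (ofthr T1)" by (simp add: hstep_CZ)
    from mstepI[OF this, of "{#[cx md]#}"] show ?thesis by (simp add: Q_def add_mset_commute)
  qed
  from w r st obtain N' where n: "mweak_step \<Sigma> n u v (Q md [CZ] T2) Tau N'" "RR (Q md [] T1) N'"
    unfolding mwbs_def by blast
  hence "MT (Q md [CZ] T2) N'" by (simp add: mweak_step_def)
  from mts_QZ[OF this v2] show ?thesis
  proof
    assume "N' = Q md [CZ] T2"
    with step_QZ_ex[of md T2] w n(2) obtain M' where "mweak_step \<Sigma> n u v (Q md [] T1) LamZ M'"
      unfolding mwbs_def by blast
    with noZV_Q0[OF v1] show ?thesis by blast
  next
    assume "\<exists>T'. N' = Q md [] T' \<and> vl T' \<and> suffix (obss md T') (obss md T2)"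
    then obtain T' where "N' = Q md [] T'" "vl T'" "suffix (obss md T') (obss md T2)" by blast
    with Q0_eq[OF w _ v1] n(2) show ?thesis by metis
  qed
qed

lemma QZ_eq: "mwbs \<Sigma> n u v RR \<Longrightarrow> RR (Q md [CZ] T1) (Q md [CZ] T2) \<Longrightarrow> vl T1 \<Longrightarrow> vl T2 \<Longrightarrow>
  obss md T1 = obss md T2"
  using QZ_suf[of RR md T1 T2] QZ_suf[of "\<lambda>M N. RR N M" md T2 T1] mwbs_conv suffix_order.antisym by blast

lemma QG_ex: "mwbs \<Sigma> n u v RR \<Longrightarrow> RR (Q md [CGv] T1) (Q md [CGv] T2) \<Longrightarrow> vl T1 \<Longrightarrow> vl T2 \<Longrightarrow>
  \<exists>x. obss md T1 = obss md x @ obss md T2"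
proof -
  assume w: "mwbs \<Sigma> n u v RR" and r: "RR (Q md [CGv] T1) (Q md [CGv] T2)" and v1: "vl T1" and v2: "vl T2"
  from w r step_QG_ex[of md T1] obtain N' where n: "mweak_step \<Sigma> n u v (Q md [CGv] T2) LamV N'" "RR (Q md [CZ] T1) N'"
    unfolding mwbs_def by blast
  from n(1) obtain N1 N2 where m: "MT (Q md [CGv] T2) N1" "MS N1 LamV N2" "MT N2 N'" by (auto simp: mweak_step_def)
  from mts_QG[OF m(1) v2] obtain x where x: "vl x" "N1 = Q md [CGv] (x @ T2)"
  proof
    assume "\<exists>T'. N1 = Q md [] T' \<and> vl T'"
    then obtain T' where "N1 = Q md [] T'" "vl T'" by blast
    with step_Q0[of T' md LamV N2] m(2) show ?thesis by simp
  qed blast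
  from step_QG[of md "x @ T2" LamV N2] m(2) x have n2: "N2 = Q md [CZ] (x @ T2)" by simp
  have vx: "vl (x @ T2)" using x v2 by auto
  from mts_QZ[OF m(3)[unfolded n2] vx] show ?thesis
  proof
    assume "N' = Q md [CZ] (x @ T2)"
    with QZ_eq[OF w _ v1 vx] n(2) show ?thesis by auto
  next
    assume "\<exists>T'. N' = Q md [] T' \<and> vl T' \<and> suffix (obss md T') (obss md (x @ T2))"
    then obtain T' where t: "N' = Q md [] T'" "vl T'" by blast
    with step_QZ_ex[of md T1] w n(2) obtain N'' where "mweak_step \<Sigma> n u v (Q md [] T') LamZ N''"
      unfolding mwbs_def by blast
    with noZV_Q0[OF t(2)] show ?thesis by blast
  qed
qed

lemma QG_eq: "mwbs \<Sigma> n u v RR \<Longrightarrow> RR (Q md [CGv] T1) (Q md [CGv] T2) \<Longrightarrow> vl T1 \<Longrightarrow> vl T2 \<Longrightarrow>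
  obss md T1 = obss md T2"
proof -
  assume a: "mwbs \<Sigma> n u v RR" "RR (Q md [CGv] T1) (Q md [CGv] T2)" "vl T1" "vl T2"
  obtain x where x: "obss md T1 = obss md x @ obss md T2" using QG_ex[OF a] by blast
  have "(\<lambda>M N. RR N M) (Q md [CGv] T2) (Q md [CGv] T1)" using a(2) by simp
  then obtain y where y: "obss md T2 = obss md y @ obss md T1" using QG_ex[OF mwbs_conv[OF a(1)] _ a(4) a(3)] by blast
  from x y have "length (obss md x) + length (obss md y) = 0" by (metis add_cancel_right_left append.assoc length_append self_append_conv2)
  thus ?thesis using x by simp
qed

lemma NEG: "mwbs \<Sigma> n u v RR \<Longrightarrow> h \<in> {[], [CZ], [CGv]} \<Longrightarrow> RR (Q md h T1) (Q md h T2) \<Longrightarrow> vl T1 \<Longrightarrow> vl T2 \<Longrightarrow>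
  obss md T1 = obss md T2"
  using Q0_eq QZ_eq QG_eq by blast

end


context GL begin

lemma prep_obs2:
  "vl T \<Longrightarrow> obss md T = b # x \<Longrightarrow>
   \<exists>T1 T'. MT (Q md [] T) (Q md [] T1) \<and> vl T1 \<and> obss md T1 = obss md T \<and>
     MS (Q md [] T1) (va b) (Q md [] T') \<and> MS (Q md [] T1) Tau (Q md [] T') \<and> vl T' \<and> obss md T' = x"
proof (cases md)
  case True
  assume vT: "vl T" and o: "obss md T = b # x"
  from o True obtain a x' where b: "b = Inl a" "wrds T = a # x'" "x = map Inl x'"
    by (cases "wrds T") (auto simp: obss_True)
  from prep[OF vT b(2), of "{#[cx md]#}"] obtain w k T' where
    p: "MT (ofthr T + {#[cx md]#}) (add_mset (CW (a # w) k # T') {#[cx md]#})" "isW n u v (a # w) k"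
       "vl T'" "w @ wrds T' = x'" by blast
  have "HS (CW (a # w) k) (Sym a) T' (ofthr (CW w k # T'))" using p(2) isW_sigma by (auto simp: hstep_CW)
  from mstepI[OF this, of "{#[cx md]#}"]
  have "MS (Q md [] (CW (a # w) k # T')) (va b) (Q md [] (CW w k # T'))" using b by (simp add: Q_def add_mset_commute)
  moreover have "HS (CW (a # w) k) Tau T' (ofthr (CW w k # T'))" using p(2) isW_sigma by (auto simp: hstep_CW)
  from mstepI[OF this, of "{#[cx md]#}"]
  have "MS (Q md [] (CW (a # w) k # T')) Tau (Q md [] (CW w k # T'))" by (simp add: Q_def add_mset_commute)
  moreover have "vl (CW (a # w) k # T')" using p(2,3) valid_CW by auto
  moreover have "obss md (CW (a # w) k # T') = obss md T" using p(4) b True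
    by (simp add: obss_True obs_def flip: map_append)
  moreover have "MT (Q md [] T) (Q md [] (CW (a # w) k # T'))" using p(1) by (simp add: Q_def add_mset_commute)
  moreover have "vl (CW w k # T')" using p(2,3) isW_tl valid_CW by auto
  moreover have "obss md (CW w k # T') = x" using p(4) b True by (simp add: obss_True obs_def flip: map_append)
  ultimately show ?thesis by blast
next
  case False
  assume vT: "vl T" and o: "obss md T = b # x"
  from vT o show ?thesis
  proof (induction T)
    case Nil thus ?case by simp
  next
    case (Cons c T0)
    have vc: "valid c" and vT0: "vl T0" using Cons.prems by auto
    from vc consider (U) k where "k \<in> {1..n}" "c = CU k" | (V) k where "k \<in> {1..n}" "c = CV k"
        | (W) w k where "c = CW w k" "isW n u v w k"
        by (auto simp: valid_def)
    thus ?case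
    proof cases
      case U
      have bx: "b = Inr k" "x = obss md T0" using Cons.prems U False by (auto simp: obs_def)
      have "HS (CU k) Tau T0 {#CW (u k) k # T0#}" using U by (simp add: hstep_CU)
      from mstepI[OF this, of "{#[cx md]#}"]
      have "MT (Q md [] (c # T0)) (Q md [] (CW (u k) k # T0))"
        using U by (intro mts_step[OF _ mts_refl]) (simp add: Q_def add_mset_commute)
      moreover have "HS (CW (u k) k) (Num k) T0 {#CW (u k) 0 # T0#}"
        using U isW_u[OF U(1)] by (simp add: hstep_CW)
      from mstepI[OF this, of "{#[cx md]#}"]
      have "MS (Q md [] (CW (u k) k # T0)) (va b) (Q md [] (CW (u k) 0 # T0))"
        using bx by (simp add: Q_def add_mset_commute)
      moreover have "HS (CW (u k) k) Tau T0 {#CW (u k) 0 # T0#}"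
        using U isW_u[OF U(1)] by (simp add: hstep_CW)
      from mstepI[OF this, of "{#[cx md]#}"]
      have "MS (Q md [] (CW (u k) k # T0)) Tau (Q md [] (CW (u k) 0 # T0))"
        by (simp add: Q_def add_mset_commute)
      moreover have "vl (CW (u k) k # T0)" using vT0 valid_CW[OF isW_u[OF U(1)]] by auto
      moreover have "obss md (CW (u k) k # T0) = obss md (c # T0)" using U by (simp add: obs_def)
      moreover have "vl (CW (u k) 0 # T0)" using vT0 valid_CW[OF isW_0[OF isW_u[OF U(1)] U(1)]] by auto
      moreover have "obss md (CW (u k) 0 # T0) = x" using bx False by (simp add: obs_def)
      ultimately show ?thesis by blast
    next
      case V
      have bx: "b = Inr k" "x = obss md T0" using Cons.prems V False by (auto simp: obs_def)
      have "HS (CV k) Tau T0 {#CW (v k) k # T0#}" using V by (simp add: hstep_CV)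
      from mstepI[OF this, of "{#[cx md]#}"]
      have "MT (Q md [] (c # T0)) (Q md [] (CW (v k) k # T0))"
        using V by (intro mts_step[OF _ mts_refl]) (simp add: Q_def add_mset_commute)
      moreover have "HS (CW (v k) k) (Num k) T0 {#CW (v k) 0 # T0#}"
        using V isW_v[OF V(1)] by (simp add: hstep_CW)
      from mstepI[OF this, of "{#[cx md]#}"]
      have "MS (Q md [] (CW (v k) k # T0)) (va b) (Q md [] (CW (v k) 0 # T0))"
        using bx by (simp add: Q_def add_mset_commute)
      moreover have "HS (CW (v k) k) Tau T0 {#CW (v k) 0 # T0#}"
        using V isW_v[OF V(1)] by (simp add: hstep_CW)
      from mstepI[OF this, of "{#[cx md]#}"]
      have "MS (Q md [] (CW (v k) k # T0)) Tau (Q md [] (CW (v k) 0 # T0))"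
        by (simp add: Q_def add_mset_commute)
      moreover have "vl (CW (v k) k # T0)" using vT0 valid_CW[OF isW_v[OF V(1)]] by auto
      moreover have "obss md (CW (v k) k # T0) = obss md (c # T0)" using V by (simp add: obs_def)
      moreover have "vl (CW (v k) 0 # T0)" using vT0 valid_CW[OF isW_0[OF isW_v[OF V(1)] V(1)]] by auto
      moreover have "obss md (CW (v k) 0 # T0) = x" using bx False by (simp add: obs_def)
      ultimately show ?thesis by blast
    next
      case W
      show ?thesis
      proof (cases "k = 0")
        case True
        hence o0: "obss md T0 = b # x" using Cons.prems W False by (simp add: obs_def)
        from Cons.IH[OF vT0 o0] obtain T1 T' where h: "MT (Q md [] T0) (Q md [] T1)" "vl T1"
          "obss md T1 = obss md T0"
          "MS (Q md [] T1) (va b) (Q md [] T')" "MS (Q md [] T1) Tau (Q md [] T')" "vl T'" "obss md T' = x" by blast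
        have "obss md (c # T0) = obss md T0" using W True False by (simp add: obs_def)
        have "MT (Q md [] (c # T0)) (Q md [] T0)" using W_vanish[OF W(2), of T0 "{#[cx md]#}"] W
          by (simp add: Q_def add_mset_commute)
        thus ?thesis using h mts_trans \<open>obss md (c # T0) = obss md T0\<close> by metis
      next
        case k0: False
        have k: "k \<in> {1..n}" using isW_k W k0 by blast
        have bx: "b = Inr k" "x = obss md T0" using Cons.prems W False k0 by (auto simp: obs_def)
        have "HS (CW w k) (Num k) T0 {#CW w 0 # T0#}" using W k by (simp add: hstep_CW)
        from mstepI[OF this, of "{#[cx md]#}"]
        have "MS (Q md [] (CW w k # T0)) (va b) (Q md [] (CW w 0 # T0))"
          using bx by (simp add: Q_def add_mset_commute)
        moreover have "HS (CW w k) Tau T0 {#CW w 0 # T0#}" using W k by (simp add: hstep_CW)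
        from mstepI[OF this, of "{#[cx md]#}"]
        have "MS (Q md [] (CW w k # T0)) Tau (Q md [] (CW w 0 # T0))"
          by (simp add: Q_def add_mset_commute)
        moreover have "vl (CW w 0 # T0)" using vT0 valid_CW isW_0 W k by auto
        moreover have "obss md (CW w 0 # T0) = x" using bx False by (simp add: obs_def)
        ultimately show ?thesis using W mts_refl Cons.prems(1) by blast
      qed
    qed
  qed
qed


lemma gen_h: "h \<in> {[], [CZ], [CGv]} \<Longrightarrow> \<forall>c\<in>set T. valid c \<Longrightarrow> \<forall>t\<in># ofthr (h @ T). gen t"
proof -
  assume a: "h \<in> {[], [CZ], [CGv]}" "\<forall>c\<in>set T. valid c"
  have "h @ T \<noteq> [] \<Longrightarrow> gen (h @ T)" unfolding gen_def using a by blast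
  thus ?thesis by (simp add: ofthr_def)
qed

lemma hstep_cx_cases: "HS (cx md) l [] G \<Longrightarrow> G = {#[CC']#} \<or> G = {#[cx md]#}"
  by (cases md) (auto simp: cx_def hstep_CI hstep_CS)

lemma istep:
  assumes "valid c" "vl rest" "HS c l rest G"
  shows "\<exists>T'. G = ofthr T' \<and> vl T' \<and>
    ((obss md T' = obss md (c#rest) \<and> (l = Tau \<or> HS (cx md) l [] {#[cx md]#})) \<or>
     (\<exists>b. obss md (c#rest) = b # obss md T' \<and> (l = Tau \<or> l = va b)))"
proof -
  from assms(1) consider (U) k where "k \<in> {1..n}" "c = CU k" | (V) k where "k \<in> {1..n}" "c = CV k"
      | (W) w k where "c = CW w k" "isW n u v w k"
    by (auto simp: valid_def)
  thus ?thesis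
  proof cases
    case U
    hence "l = Tau" "G = ofthr (CW (u k) k # rest)" using assms(3) by (auto simp: hstep_CU)
    moreover have "obss md (CW (u k) k # rest) = obss md (c # rest)" using U by (simp add: obs_def)
    moreover have "vl (CW (u k) k # rest)" using assms(2) valid_CW[OF isW_u[OF U(1)]] by auto
    ultimately show ?thesis by blast
  next
    case V
    hence "l = Tau" "G = ofthr (CW (v k) k # rest)" using assms(3) by (auto simp: hstep_CV)
    moreover have "obss md (CW (v k) k # rest) = obss md (c # rest)" using V by (simp add: obs_def)
    moreover have "vl (CW (v k) k # rest)" using assms(2) valid_CW[OF isW_v[OF V(1)]] by auto
    ultimately show ?thesis by blast
  next
    case W
    from assms(3) W consider (a) a w' where "w = a # w'" "a \<in> \<Sigma>" "l = Sym a \<or> l = Tau" "G = ofthr (CW w' k # rest)"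
        | (b) "k \<in> {1..n}" "l = Num k \<or> l = Tau" "G = ofthr (CW w 0 # rest)"
        | (c) "w = []" "k = 0" "l = Tau" "G = ofthr rest"
      by (auto simp: hstep_CW)
    thus ?thesis
    proof cases
      case a
      have v': "vl (CW w' k # rest)" using assms(2) W a isW_tl valid_CW by auto
      show ?thesis
      proof (cases md)
        case True
        have "obss md (c # rest) = va_inv # obss md (CW w' k # rest)" if "va_inv = Inl a" for va_inv
          using True W a that by (simp add: obs_def)
        hence "obss md (c # rest) = Inl a # obss md (CW w' k # rest)" by blast
        thus ?thesis using v' a by (intro exI[of _ "CW w' k # rest"]) auto
      next
        case False
        have "obss md (c # rest) = obss md (CW w' k # rest)" using False W a by (simp add: obs_def)
        moreover have "l = Tau \<or> HS (cx md) l [] {#[cx md]#}" using a False by (auto simp: cx_def hstep_CS)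
        ultimately show ?thesis using v' a by (intro exI[of _ "CW w' k # rest"]) auto
      qed
    next
      case b
      have v': "vl (CW w 0 # rest)" using assms(2) W b isW_0 valid_CW by auto
      show ?thesis
      proof (cases md)
        case True
        have "obss md (c # rest) = obss md (CW w 0 # rest)" using True W b by (simp add: obs_def)
        moreover have "l = Tau \<or> HS (cx md) l [] {#[cx md]#}" using b True by (auto simp: cx_def hstep_CI)
        ultimately show ?thesis using v' b by (intro exI[of _ "CW w 0 # rest"]) auto
      next
        case False
        have "k \<noteq> 0" using b by auto
        hence "obss md (c # rest) = Inr k # obss md (CW w 0 # rest)" using False W b by (simp add: obs_def)
        thus ?thesis using v' b by (intro exI[of _ "CW w 0 # rest"]) auto
      qed
    next
      case c
      have "obss md (c # rest) = obss md rest" using W c by (simp add: obs_def)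
      thus ?thesis using assms(2) c by (intro exI[of _ rest]) auto
    qed
  qed
qed

definition S1g where
  "S1g md M N \<longleftrightarrow> (\<exists>h T1 T2. h \<in> {[], [CZ], [CGv]} \<and> M = Q md h T1 \<and> N = Q md h T2 \<and>
     vl T1 \<and> vl T2 \<and> obss md T1 = obss md T2)"

definition SSg where "SSg md M N \<longleftrightarrow> S1g md M N \<or> S2 M N \<or> (M = N \<and> wfm M)"

lemma SSg_sym: "SSg md M N \<Longrightarrow> SSg md N M"
  unfolding SSg_def S1g_def using S2_sym by metis

lemma wf_Q: "h \<in> {[], [CZ], [CGv]} \<Longrightarrow> vl T \<Longrightarrow> wfm (Q md h T)"
proof -
  assume h: "h \<in> {[], [CZ], [CGv]}" and T: "vl T"
  have "\<forall>x\<in>set (h @ T). x \<notin> forb" using h T valid_nforb by (auto simp: forb_def)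
  moreover have "cx md \<in> forb" by (simp add: forb_def cx_def)
  ultimately show ?thesis by (auto simp: wfm_def ofthr_def Q_def)
qed

lemma SSg_wf: "SSg md M N \<Longrightarrow> wfm M \<and> wfm N"
  unfolding SSg_def S1g_def S2_def using wf_Q wf_S2 by auto

abbreviation "GOALg md M N l M' \<equiv> (\<exists>N'' N'. MT N N'' \<and> MS N'' l N' \<and> SSg md M N'' \<and> SSg md M' N') \<or> (l = Tau \<and> SSg md M' N)"

lemma goalg_direct: "MS N l N' \<Longrightarrow> SSg md M N \<Longrightarrow> SSg md M' N' \<Longrightarrow> GOALg md M N l M'"
  by (rule disjI1, rule exI[of _ N], rule exI[of _ N']) simp

lemma S1gI: "h \<in> {[], [CZ], [CGv]} \<Longrightarrow> vl T1 \<Longrightarrow> vl T2 \<Longrightarrow> obss md T1 = obss md T2 \<Longrightarrow>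
   SSg md (Q md h T1) (Q md h T2)"
  unfolding SSg_def S1g_def by (rule disjI1, rule exI[of _ h], rule exI[of _ T1], rule exI[of _ T2]) simp

lemma Q_eq_add: "Q md h T = ofthr (h @ T) + {#[cx md]#}" by (simp add: Q_def)

lemma S1g_step:
  assumes s: "S1g md M N" and st: "MS M l M'"
  shows "GOALg md M N l M'"
proof -
  from s obtain h T1 T2 where hT: "h \<in> {[], [CZ], [CGv]}" "M = Q md h T1" "N = Q md h T2"
     "vl T1" "vl T2" "obss md T1 = obss md T2"
    unfolding S1g_def by blast
  have sMN: "SSg md M N" using s by (simp add: SSg_def)
  from st obtain c rest K G where st': "M = add_mset (c#rest) K" "HS c l rest G" "M' = G + K"
    unfolding mstep_def by blast
  from split_I[of c rest K "cx md" "h @ T1"] st'(1) hT(2)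
  consider (A) "c = cx md" "rest = []" "K = ofthr (h @ T1)" | (B) "c # rest = h @ T1" "K = {#[cx md]#}"
    by (auto simp: Q_def)
  thus ?thesis
  proof cases
    case A
    have hsN: "MS N l (G + ofthr (h @ T2))" using mstepI[of _ _ _ _ "cx md" l "[]" G "ofthr (h @ T2)"] st'(2) A hT(3)
      by (simp add: Q_def)
    from hstep_cx_cases[of md l G] st'(2) A consider "G = {#[CC']#}" | "G = {#[cx md]#}" by auto
    thus ?thesis
    proof cases
      case 1
      have "SSg md M' (G + ofthr (h @ T2))"
        using A 1 st'(3) gen_h[OF hT(1) hT(4)] gen_h[OF hT(1) hT(5)] unfolding SSg_def S2_def by auto
      thus ?thesis using goalg_direct sMN hsN by blast
    next
      case 2
      have "M' = M" "G + ofthr (h @ T2) = N" using A 2 st' hT by (auto simp: Q_def)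
      thus ?thesis using goalg_direct sMN hsN by metis
    qed
  next
    case B
    have M'2: "M' = G + {#[cx md]#}" using st'(3) B by simp
    from hT(1) consider (Gv) "h = [CGv]" | (Z) "h = [CZ]" | (E) "h = []" by auto
    thus ?thesis
    proof cases
      case Gv
      hence cr: "c = CGv" "rest = T1" using B by auto
      have N3: "N = add_mset (CGv # T2) {#[cx md]#}" using hT(3) Gv by (simp add: Q_def)
      from st'(2) cr consider (i) k where "l = Tau" "k \<in> {1..n}" "G = {#CGv # CV k # T1#}"
        | (ii) "l = Tau" "G = ofthr T1" | (iii) "l = LamV" "G = {#CZ # T1#}"
        by (auto simp: hstep_CGv)
      thus ?thesis
      proof cases
        case i
        have "HS CGv l T2 {#CGv # CV k # T2#}" using i by (auto simp: hstep_CGv)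
        from mstepI[OF this, of "{#[cx md]#}"] have "MS N l (Q md [CGv] (CV k # T2))" using N3 by (simp add: Q_def)
        moreover have "M' = Q md [CGv] (CV k # T1)" using M'2 i by (simp add: Q_def)
        moreover have "SSg md (Q md [CGv] (CV k # T1)) (Q md [CGv] (CV k # T2))"
          using i hT by (intro S1gI) (auto simp: valid_CV)
        ultimately show ?thesis using goalg_direct sMN by metis
      next
        case ii
        have "HS CGv l T2 (ofthr T2)" using ii by (auto simp: hstep_CGv)
        from mstepI[OF this, of "{#[cx md]#}"] have "MS N l (Q md [] T2)" using N3 by (simp add: Q_def)
        moreover have "M' = Q md [] T1" using M'2 ii by (simp add: Q_def)
        moreover have "SSg md (Q md [] T1) (Q md [] T2)" using hT by (intro S1gI) auto
        ultimately show ?thesis using goalg_direct sMN by metis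
      next
        case iii
        have "HS CGv l T2 {#CZ # T2#}" using iii by (auto simp: hstep_CGv)
        from mstepI[OF this, of "{#[cx md]#}"] have "MS N l (Q md [CZ] T2)" using N3 by (simp add: Q_def)
        moreover have "M' = Q md [CZ] T1" using M'2 iii by (simp add: Q_def)
        moreover have "SSg md (Q md [CZ] T1) (Q md [CZ] T2)" using hT by (intro S1gI) auto
        ultimately show ?thesis using goalg_direct sMN by metis
      qed
    next
      case Z
      hence cr: "c = CZ" "rest = T1" using B by auto
      have N3: "N = add_mset (CZ # T2) {#[cx md]#}" using hT(3) Z by (simp add: Q_def)
      from st'(2) cr have l: "l = Tau \<or> l = LamZ" and g: "G = ofthr T1" by (auto simp: hstep_CZ)
      have "HS CZ l T2 (ofthr T2)" using l by (auto simp: hstep_CZ)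
      from mstepI[OF this, of "{#[cx md]#}"] have "MS N l (Q md [] T2)" using N3 by (simp add: Q_def)
      moreover have "M' = Q md [] T1" using M'2 g by (simp add: Q_def)
      moreover have "SSg md (Q md [] T1) (Q md [] T2)" using hT by (intro S1gI) auto
      ultimately show ?thesis using goalg_direct sMN by metis
    next
      case E
      hence T1: "T1 = c # rest" using B by auto
      have vc: "valid c" and vr: "vl rest" using hT(4) T1 by auto
      from istep[OF vc vr st'(2), of md] obtain T' where it: "G = ofthr T'" "vl T'"
        "(obss md T' = obss md (c#rest) \<and> (l = Tau \<or> HS (cx md) l [] {#[cx md]#})) \<or>
         (\<exists>b. obss md (c#rest) = b # obss md T' \<and> (l = Tau \<or> l = va b))" by blast
      have M'3: "M' = Q md [] T'" using M'2 it(1) by (simp add: Q_def)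
      from it(3) consider (p1) "obss md T' = obss md (c#rest)" "l = Tau"
        | (p2) "obss md T' = obss md (c#rest)" "HS (cx md) l [] {#[cx md]#}"
        | (p3) b where "obss md (c#rest) = b # obss md T'" "l = Tau \<or> l = va b" by blast
      thus ?thesis
      proof cases
        case p1
        note o = p1(1)
        have "l = Tau" using p1 by simp
        moreover have "SSg md M' N" using M'3 hT E o T1 it(2) by (auto intro: S1gI)
        ultimately show ?thesis by blast
      next
        case p2
        note o = p2(1) and hc = p2(2)
        have "MS N l N" using mstepI[OF hc, of "ofthr T2"] hT(3) E by (simp add: Q_def)
        moreover have "SSg md M' N" using M'3 hT E o T1 it(2) by (auto intro: S1gI)
        ultimately show ?thesis using goalg_direct sMN by blast
      next
        case p3
        note o = p3(1) and lb = p3(2)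
        have "obss md T2 = b # obss md T'" using o hT(6) T1 by simp
        from prep_obs2[OF hT(5) this] obtain T2a T2' where p: "MT (Q md [] T2) (Q md [] T2a)" "vl T2a"
          "obss md T2a = obss md T2" "MS (Q md [] T2a) (va b) (Q md [] T2')" "MS (Q md [] T2a) Tau (Q md [] T2')"
          "vl T2'" "obss md T2' = obss md T'" by blast
        have "MS (Q md [] T2a) l (Q md [] T2')" using lb p(4,5) by auto
        moreover have "SSg md M (Q md [] T2a)" using hT E p(2,3) by (auto intro: S1gI)
        moreover have "SSg md M' (Q md [] T2')" using M'3 it(2) p(6,7) by (auto intro: S1gI)
        ultimately show ?thesis using p(1) hT(3) E by auto
      qed
    qed
  qed
qed

lemma SSg_refl_wf: "wfm M \<Longrightarrow> SSg md M M" by (simp add: SSg_def)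

lemma SSg_mbbs: "mbbs \<Sigma> n u v (SSg md)"
  unfolding mbbs_def
proof (intro allI impI)
  fix M N assume s: "SSg md M N"
  have "\<forall>l M'. MS M l M' \<longrightarrow> GOALg md M N l M'"
  proof (intro allI impI)
    fix l M' assume st: "MS M l M'"
    from s consider "S1g md M N" | "S2 M N" | "M = N" "wfm M" unfolding SSg_def by blast
    thus "GOALg md M N l M'"
    proof cases
      case 1 thus ?thesis using S1g_step st by blast
    next
      case 2
      from 2 obtain K1 K2 where k: "M = add_mset [CC'] K1" "N = add_mset [CC'] K2" "\<forall>t\<in>#K1. gen t" "\<forall>t\<in>#K2. gen t"
        unfolding S2_def by blast
      have "MT N M" using C'_reach[OF k(4) k(3)] k by simp
      moreover have "wfm M" using wf_S2 k by simp
      moreover hence "wfm M'" using mstep_wf st by blast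
      ultimately show ?thesis using st SSg_refl_wf by blast
    next
      case 3 thus ?thesis using st SSg_refl_wf mstep_wf mts_refl by blast
    qed
  qed
  thus "wfm M \<and> wfm N \<and> (\<forall>l M'. MS M l M' \<longrightarrow> GOALg md M N l M')" using SSg_wf s by auto
qed

end


lemma seqs_tp: "seqs (map Const cs) = tp cs"
  by (induction cs) (auto simp: seqs_def)

lemma seqm_ofthr_app: "seqm (ofthr a) (ofthr b) = Some (ofthr (a @ b))"
  by (auto simp: ofthr_def)

lemma norm_start:
  assumes "norm B = Some (ofthr h)"
  shows "norm (Par (Const X) (Seq B (Seq (seqs (map Const cs)) (seqs (map Const ds))))) =
    Some (add_mset [X] (ofthr (h @ cs @ ds)))"
  using assms by (simp add: seqs_tp seqn_def parn_def seqm_ofthr_app)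

context GL begin

lemma key:
  assumes h: "h \<in> {[], [CZ], [CGv]}" and v1: "vl T1" and v2: "vl T2"
    and n1: "norm P = Some (Q md h T1)" and n2: "norm R = Some (Q md h T2)"
    and eq: "eq \<in> {branching_bisim \<Sigma> n u v, weak_bisim \<Sigma> n u v}"
  shows "eq P R \<longleftrightarrow> obss md T1 = obss md T2"
proof -
  have w1: "wfm (Q md h T1)" and w2: "wfm (Q md h T2)" using wf_Q h v1 v2 by auto
  show ?thesis
  proof
    assume "eq P R"
    hence "weak_bisim \<Sigma> n u v P R" using eq branching_imp_weak by auto
    from weak_lift[OF this n1 n2 w1 w2] obtain RR where "mwbs \<Sigma> n u v RR" "RR (Q md h T1) (Q md h T2)" by blast
    thus "obss md T1 = obss md T2" using NEG h v1 v2 by blast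
  next
    assume "obss md T1 = obss md T2"
    hence "SSg md (Q md h T1) (Q md h T2)" using S1gI h v1 v2 by blast
    hence "branching_bisim \<Sigma> n u v P R" using branching_lift[OF SSg_mbbs SSg_sym _ n1 n2] by blast
    thus "eq P R" using eq branching_imp_weak by auto
  qed
qed

end

theorem lemma5:
  fixes \<Sigma> :: "'a set" and n :: nat and u v :: "nat \<Rightarrow> 'a list"
    and iss js :: "nat list" and B :: "'a proc" and ps :: "'a proc list"
    and eq :: "'a proc \<Rightarrow> 'a proc \<Rightarrow> bool"
  assumes "finite \<Sigma>" and "card \<Sigma> \<ge> 2"
    and "\<forall>k\<in>{1..n}. u k \<noteq> [] \<and> set (u k) \<subseteq> \<Sigma> \<and> v k \<noteq> [] \<and> set (v k) \<subseteq> \<Sigma>"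
    and "iss \<noteq> []" and "set iss \<subseteq> {1..n}"
    and "js \<noteq> []" and "set js \<subseteq> {1..n}"
    and "B \<in> {Eps, Const CZ, Const CGv}"
    and "set ps \<subseteq> {Const (CU k) | k. k \<in> {1..n}} \<union> {Const (CV k) | k. k \<in> {1..n}}"
    and "eq \<in> {branching_bisim \<Sigma> n u v, weak_bisim \<Sigma> n u v}"
  shows "(eq (Par (Const CI) (Seq B (Seq (seqs ps) (seqs (map (\<lambda>i. Const (CU i)) iss)))))
             (Par (Const CI) (Seq B (Seq (seqs ps) (seqs (map (\<lambda>j. Const (CV j)) js)))))
          \<longleftrightarrow> concat (map u iss) = concat (map v js))
       \<and> (eq (Par (Const CS) (Seq B (Seq (seqs ps) (seqs (map (\<lambda>i. Const (CU i)) iss)))))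
             (Par (Const CS) (Seq B (Seq (seqs ps) (seqs (map (\<lambda>j. Const (CV j)) js)))))
          \<longleftrightarrow> iss = js)"
proof -
  note uv = assms(3)
  interpret GL \<Sigma> n u v using uv by unfold_locales
  define cs where "cs = map (\<lambda>p. case p of Const c \<Rightarrow> c | _ \<Rightarrow> CX) ps"
  have psc: "ps = map Const cs" and vcs: "vl cs"
  proof -
    have a: "\<forall>p\<in>set ps. \<exists>k\<in>{1..n}. p = Const (CU k) \<or> p = Const (CV k)" using assms(9) by blast
    show "ps = map Const cs" unfolding cs_def using a by (induction ps) auto
    show "vl cs" unfolding cs_def using a valid_CU valid_CV by (induction ps) auto
  qed
  have "\<exists>h. h \<in> {[], [CZ], [CGv]} \<and> norm B = Some (ofthr h)"
  proof -
    from assms(8) consider "B = Eps" | "B = Const CZ" | "B = Const CGv" by blast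
    thus ?thesis
    proof cases
      case 1 thus ?thesis by (intro exI[of _ "[]"]) (simp add: ofthr_def)
    next
      case 2 thus ?thesis by (intro exI[of _ "[CZ]"]) (simp add: ofthr_def)
    next
      case 3 thus ?thesis by (intro exI[of _ "[CGv]"]) (simp add: ofthr_def)
    qed
  qed
  then obtain h where h: "h \<in> {[], [CZ], [CGv]}" "norm B = Some (ofthr h)" by blast
  define TU where "TU = cs @ map CU iss"
  define TV where "TV = cs @ map CV js"
  have vU: "vl TU" unfolding TU_def using vcs assms(5) valid_CU by auto
  have vV: "vl TV" unfolding TV_def using vcs assms(7) valid_CV by auto
  have mU: "map (\<lambda>i. Const (CU i)) iss = map Const (map CU iss)" by simp
  have mV: "map (\<lambda>j. Const (CV j)) js = map Const (map CV js)" by simp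
  have nn: "norm (Par (Const (cx md)) (Seq B (Seq (seqs ps) (seqs (map (\<lambda>i. Const (CU i)) iss))))) = Some (Q md h TU)"
    "norm (Par (Const (cx md)) (Seq B (Seq (seqs ps) (seqs (map (\<lambda>j. Const (CV j)) js))))) = Some (Q md h TV)" for md
  proof -
    show "norm (Par (Const (cx md)) (Seq B (Seq (seqs ps) (seqs (map (\<lambda>i. Const (CU i)) iss))))) = Some (Q md h TU)"
      unfolding psc mU using norm_start[OF h(2), of "cx md" cs "map CU iss"] by (simp only: Q_def TU_def)
    show "norm (Par (Const (cx md)) (Seq B (Seq (seqs ps) (seqs (map (\<lambda>j. Const (CV j)) js))))) = Some (Q md h TV)"
      unfolding psc mV using norm_start[OF h(2), of "cx md" cs "map CV js"] by (simp only: Q_def TV_def)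
  qed
  have e1: "eq (Par (Const CI) (Seq B (Seq (seqs ps) (seqs (map (\<lambda>i. Const (CU i)) iss)))))
             (Par (Const CI) (Seq B (Seq (seqs ps) (seqs (map (\<lambda>j. Const (CV j)) js)))))
          \<longleftrightarrow> obss True TU = obss True TV"
    using key[OF h(1) vU vV nn(1)[of True, unfolded cx_def if_True] nn(2)[of True, unfolded cx_def if_True] assms(10)] .
  have e2: "eq (Par (Const CS) (Seq B (Seq (seqs ps) (seqs (map (\<lambda>i. Const (CU i)) iss)))))
             (Par (Const CS) (Seq B (Seq (seqs ps) (seqs (map (\<lambda>j. Const (CV j)) js)))))
          \<longleftrightarrow> obss False TU = obss False TV"
    using key[OF h(1) vU vV nn(1)[of False, unfolded cx_def if_False] nn(2)[of False, unfolded cx_def if_False] assms(10)] .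
  have wu: "wrds (map CU iss) = concat (map u iss)" by (induction iss) auto
  have wv: "wrds (map CV js) = concat (map v js)" by (induction js) auto
  have o1: "obss True TU = obss True TV \<longleftrightarrow> concat (map u iss) = concat (map v js)"
    unfolding obss_True TU_def TV_def using wu wv by (simp add: inj_map_eq_map)
  have iu: "obss False (map CU iss) = map Inr iss" by (induction iss) (auto simp: obs_def)
  have iv: "obss False (map CV js) = map Inr js" by (induction js) (auto simp: obs_def)
  have o2: "obss False TU = obss False TV \<longleftrightarrow> iss = js"
    unfolding TU_def TV_def using iu iv by (simp add: inj_map_eq_map)
  show ?thesis using e1 e2 o1 o2 by simp
qed


end
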